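(* Let $(\psi_{s,t})$ be an evolution family of order $d\in[1,+\infty]$ and let $a\in AC^d([0,+\infty),\mathbb D)$, $b\in AC^d([0,+\infty),\partial\mathbb D)$. For $t\ge0$ and $z\in\mathbb D$ let $h_t(z):=\frac{b(t)z+a(t)}{1+b(t)\overline{a(t)}z}$. Define $\varphi_{s,t}:=h_t\circ\psi_{s,t}\circ h_s^{-1}$ and $\tilde\varphi_{s,t}:=h_t^{-1}\circ\psi_{s,t}\circ h_s$ for $0\le s\le t$. Then $(\varphi_{s,t})$ and $(\tilde\varphi_{s,t})$ are evolution families of order $d$.
   Context: $\mathbb D$ is the open unit disk. For $d\in[1,+\infty]$, an evolution family of order $d$ is a family $(\varphi_{s,t})_{0\le s\le t<+\infty}$ of holomorphic self-maps of $\mathbb D$ with $\varphi_{s,s}=\mathrm{id}_{\mathbb D}$, $\varphi_{s,t}=\varphi_{u,t}\circ\varphi_{s,u}$ for $0\le s\le u\le t$, and such that for every $z\in\mathbb D$, $T>0$ there is a non-negative $k_{z,T}\in L^d([0,T])$ with $|\varphi_{s,u}(z)-\varphi_{s,t}(z)|\le\int_u^tk_{z,T}$ for all $0\le s\le u\le t\le T$. $AC^d(X,Y)$ denotes the class of locally absolutely continuous functions $f:X\to Y$ with $f'\in L^d_{\mathrm{loc}}(X)$. *)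

theory Defs
  imports "HOL-Analysis.Analysis"
begin

abbreviation unit_disk :: "complex set" where
  "unit_disk \<equiv> ball 0 1"

definition Lp_on :: "ereal \<Rightarrow> real set \<Rightarrow> (real \<Rightarrow> 'b::{banach,second_countable_topology}) \<Rightarrow> bool" where
  "Lp_on d S f \<longleftrightarrow>
     f \<in> borel_measurable (lebesgue_on S) \<and>
     (if d = \<infinity> then (\<exists>C. AE x in lebesgue_on S. norm (f x) \<le> C)
      else set_integrable lebesgue S (\<lambda>x. norm (f x) powr real_of_ereal d))"

definition Lp_loc :: "ereal \<Rightarrow> (real \<Rightarrow> 'b::{banach,second_countable_topology}) \<Rightarrow> bool" where
  "Lp_loc d f \<longleftrightarrow> (\<forall>T>0. Lp_on d {0..T} f)"

definition abs_cont_on :: "real set \<Rightarrow> (real \<Rightarrow> 'b::real_normed_vector) \<Rightarrow> bool" where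
  "abs_cont_on S f \<longleftrightarrow>
     (\<forall>\<epsilon>>0. \<exists>\<delta>>0. \<forall>(n::nat) (u::nat \<Rightarrow> real) (v::nat \<Rightarrow> real).
        (\<forall>i<n. u i \<in> S \<and> v i \<in> S \<and> u i \<le> v i) \<and>
        (\<forall>i<n. \<forall>j<n. i \<noteq> j \<longrightarrow> v i \<le> u j \<or> v j \<le> u i) \<and>
        (\<Sum>i<n. v i - u i) < \<delta>
        \<longrightarrow> (\<Sum>i<n. norm (f (v i) - f (u i))) < \<epsilon>)"

definition ACd :: "ereal \<Rightarrow> complex set \<Rightarrow> (real \<Rightarrow> complex) \<Rightarrow> bool" where
  "ACd d Y f \<longleftrightarrow>
     (\<forall>t\<ge>0. f t \<in> Y) \<and>
     (\<forall>T>0. abs_cont_on {0..T} f) \<and>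
     (\<exists>g. Lp_loc d g \<and>
          (AE t in lebesgue_on {0..}. (f has_vector_derivative g t) (at t within {0..})))"

definition evolution_family :: "ereal \<Rightarrow> (real \<Rightarrow> real \<Rightarrow> complex \<Rightarrow> complex) \<Rightarrow> bool" where
  "evolution_family d \<phi> \<longleftrightarrow>
     (\<forall>s t. 0 \<le> s \<and> s \<le> t \<longrightarrow> \<phi> s t holomorphic_on unit_disk \<and> \<phi> s t ` unit_disk \<subseteq> unit_disk) \<and>
     (\<forall>s\<ge>0. \<forall>z\<in>unit_disk. \<phi> s s z = z) \<and>
     (\<forall>s u t. 0 \<le> s \<and> s \<le> u \<and> u \<le> t \<longrightarrow> (\<forall>z\<in>unit_disk. \<phi> s t z = \<phi> u t (\<phi> s u z))) \<and>
     (\<forall>z\<in>unit_disk. \<forall>T>0. \<exists>k::real \<Rightarrow> real. (\<forall>x. 0 \<le> k x) \<and> Lp_on d {0..T} k \<and>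
        (\<forall>s u t. 0 \<le> s \<and> s \<le> u \<and> u \<le> t \<and> t \<le> T \<longrightarrow>
           norm (\<phi> s u z - \<phi> s t z) \<le> integral {u..t} k))"

end

theory Submission
  imports Defs "HOL-Complex_Analysis.Complex_Analysis"
begin

definition mob :: "complex \<Rightarrow> complex \<Rightarrow> complex \<Rightarrow> complex" where
  "mob a b z = (b*z+a)/(1+b*cnj a*z)"

lemma mob_ident:
  fixes a b z :: complex assumes "cmod b = 1"
  shows "(cmod (1 + b*cnj a*z))^2 - (cmod (b*z+a))^2 = (1-(cmod a)^2)*(1-(cmod z)^2)"
proof -
  have bb: "b * cnj b = 1" using assms complex_norm_square[of b] by simp
  have na: "complex_of_real ((cmod a)^2) = a*cnj a" and nz: "complex_of_real ((cmod z)^2) = z*cnj z"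
    by (rule complex_norm_square)+
  have "complex_of_real ((cmod (1 + b*cnj a*z))^2 - (cmod (b*z+a))^2)
     = (1 + b*cnj a*z)*cnj (1 + b*cnj a*z) - (b*z+a)*cnj(b*z+a)"
    by (simp only: of_real_diff complex_norm_square)
  also have "\<dots> = 1 + a*cnj a*z*cnj z*(b*cnj b) - z*cnj z*(b*cnj b) - a * cnj a"
    by (simp add: algebra_simps)
  also have "\<dots> = (1 - complex_of_real ((cmod a)^2))*(1-complex_of_real ((cmod z)^2))"
    unfolding na nz bb by (simp add: algebra_simps)
  also have "\<dots> = complex_of_real ((1-(cmod a)^2)*(1-(cmod z)^2))"
    by simp
  finally show ?thesis using of_real_eq_iff by blast
qed

lemma one_minus_acnj: "1 - a*cnj a = complex_of_real (1 - (cmod a)^2)"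
proof -
  have "complex_of_real ((cmod a)^2) = a*cnj a" by (rule complex_norm_square)
  then show ?thesis by (metis of_real_1 of_real_diff)
qed

lemma mob_den_ge:
  assumes "cmod b = 1" "cmod z \<le> 1"
  shows "cmod (1+b*cnj a*z) \<ge> 1 - cmod a"
proof -
  have "cmod (b*cnj a*z) = cmod a * cmod z" using assms by (simp add: norm_mult)
  also have "\<dots> \<le> cmod a" using assms(2) by (simp add: mult_left_le)
  finally have "cmod (b*cnj a*z) \<le> cmod a" .
  moreover have "cmod (1::complex) - cmod (b*cnj a*z) \<le> cmod (1+b*cnj a*z)"
    by (metis norm_diff_ineq norm_minus_cancel diff_minus_eq_add)
  ultimately show ?thesis by simp
qed

lemma mob_den_le:
  assumes "cmod b = 1"
  shows "cmod (1+b*cnj a*z) \<le> 1 + cmod a * cmod z"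
proof -
  have "cmod (1+b*cnj a*z) \<le> 1 + cmod (b*cnj a*z)"
    by (metis norm_one norm_triangle_ineq)
  also have "cmod (b*cnj a*z) = cmod a * cmod z" using assms by (simp add: norm_mult)
  finally show ?thesis .
qed

lemma mob_den_nz:
  assumes "cmod a < 1" "cmod b = 1" "cmod z \<le> 1"
  shows "1+b*cnj a*z \<noteq> 0"
  using mob_den_ge[OF assms(2,3), of a] assms(1) by auto

lemma mob_norm_sq:
  assumes "cmod a < 1" "cmod b = 1" "cmod z < 1"
  shows "1 - (cmod (mob a b z))^2 = (1-(cmod a)^2)*(1-(cmod z)^2) / (cmod (1+b*cnj a*z))^2"
proof -
  have nz: "cmod (1+b*cnj a*z) \<noteq> 0" using mob_den_nz[OF assms(1,2), of z] assms by simp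
  have m2: "(cmod (mob a b z))^2 = (cmod (b*z+a))^2 / (cmod (1+b*cnj a*z))^2"
    by (simp add: mob_def norm_divide power_divide)
  have "1 - (cmod (b*z+a))^2 / (cmod (1+b*cnj a*z))^2 = ((cmod (1+b*cnj a*z))^2 - (cmod (b*z+a))^2) / (cmod (1+b*cnj a*z))^2"
    using nz by (simp add: field_simps)
  then show ?thesis using mob_ident[OF assms(2), of a z] m2 by simp
qed

lemma aux_sq:
  fixes x y :: real assumes "1 + x*y \<noteq> 0"
  shows "1 - ((y+x)/(1+x*y))^2 = (1-x^2)*(1-y^2)/(1+x*y)^2"
proof -
  have "(1+x*y)^2 - (y+x)^2 = (1-x^2)*(1-y^2)" by algebra
  moreover have "1 - ((y+x)/(1+x*y))^2 = ((1+x*y)^2 - (y+x)^2)/(1+x*y)^2"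
    using assms by (simp add: field_simps)
  ultimately show ?thesis by simp
qed

lemma mob_bound:
  assumes "cmod a < 1" "cmod b = 1" "cmod z < 1"
  shows "cmod (mob a b z) \<le> (cmod z + cmod a)/(1 + cmod a * cmod z)"
proof -
  let ?Q = "cmod (1+b*cnj a*z)"
  have nz: "?Q > 0" using mob_den_nz[OF assms(1,2), of z] assms by simp
  have Qle: "?Q \<le> 1 + cmod a * cmod z" by (rule mob_den_le[OF assms(2)])
  have pos: "(1-(cmod a)^2)*(1-(cmod z)^2) \<ge> 0"
    using assms by (simp add: abs_square_le_1 less_imp_le)
  have d: "1 + cmod a * cmod z > 0" by (simp add: add_pos_nonneg)
  have "(1-(cmod a)^2)*(1-(cmod z)^2) / (1 + cmod a * cmod z)^2 \<le> (1-(cmod a)^2)*(1-(cmod z)^2) / ?Q^2"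
    using nz Qle pos d by (intro divide_left_mono) (auto intro: power_mono mult_pos_pos)
  also have "\<dots> = 1 - (cmod (mob a b z))^2" using mob_norm_sq[OF assms] by simp
  finally have *: "(1-(cmod a)^2)*(1-(cmod z)^2) / (1 + cmod a * cmod z)^2 \<le> 1 - (cmod (mob a b z))^2" .
  have d: "1 + cmod a * cmod z > 0" by (simp add: add_pos_nonneg)
  have "1 - ((cmod z + cmod a)/(1 + cmod a * cmod z))^2 = (1-(cmod a)^2)*(1-(cmod z)^2) / (1 + cmod a * cmod z)^2"
    by (rule aux_sq) (use d in simp)
  with * have "(cmod (mob a b z))^2 \<le> ((cmod z + cmod a)/(1 + cmod a * cmod z))^2" by linarith
  then show ?thesis by (rule power2_le_imp_le) (use d in simp)
qed

lemma mob_in_disk: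
  assumes "cmod a < 1" "cmod b = 1" "cmod z < 1"
  shows "cmod (mob a b z) < 1"
proof -
  have "(cmod z + cmod a)/(1 + cmod a * cmod z) < 1"
  proof -
    have "0 < (1 - cmod a)*(1 - cmod z)" using assms by (simp add: mult_pos_pos)
    then have "cmod z + cmod a < 1 + cmod a * cmod z" by (simp add: algebra_simps)
    then show ?thesis by (simp add: add_pos_nonneg)
  qed
  then show ?thesis using mob_bound[OF assms] by linarith
qed

lemma mob_holo:
  assumes "cmod a < 1" "cmod b = 1"
  shows "mob a b holomorphic_on ball 0 1"
  unfolding mob_def
  by (intro holomorphic_intros) (use mob_den_nz[OF assms] in auto)

lemma mob_inv:
  assumes "cmod a < 1" "cmod b = 1" "cmod z < 1"
  shows "mob (-(cnj b*a)) (cnj b) (mob a b z) = z"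
proof -
  have bb: "b * cnj b = 1" using assms complex_norm_square[of b] by simp
  have Q: "1+b*cnj a*z \<noteq> 0" using mob_den_nz[OF assms(1,2)] assms(3) by simp
  have "(cmod a)^2 < 1" using assms(1) abs_square_less_1 by fastforce
  then have "1 - (cmod a)^2 \<noteq> 0" by simp
  then have aa: "1 - a * cnj a \<noteq> 0" by (metis one_minus_acnj of_real_eq_0_iff)
  define w where "w = (b*z+a)/(1+b*cnj a*z)"
  have mw: "mob (-(cnj b*a)) (cnj b) w = (cnj b * (w - a))/(1 - (b*cnj b)*cnj a*w)"
    by (simp add: mob_def algebra_simps)
  have e1: "w - a = b*z*(1 - a*cnj a)/(1+b*cnj a*z)" using Q by (simp add: w_def field_simps)
  have e2: "1 - cnj a * w = (1 - a*cnj a)/(1+b*cnj a*z)" using Q by (simp add: w_def field_simps)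
  have "mob (-(cnj b*a)) (cnj b) (mob a b z) = mob (-(cnj b*a)) (cnj b) w" by (simp add: w_def mob_def)
  also have "\<dots> = (cnj b * (b*z*(1 - a*cnj a)/(1+b*cnj a*z))) / ((1 - a*cnj a)/(1+b*cnj a*z))"
    unfolding mw bb e1[symmetric] e2[symmetric] by simp
  also have "\<dots> = cnj b * (b * z)"
  proof -
    have gen: "\<And>c u Y Q::complex. Q \<noteq> 0 \<Longrightarrow> Y \<noteq> 0 \<Longrightarrow> (c * (u*Y/Q))/(Y/Q) = c*u"
      by (simp add: field_simps)
    show ?thesis using gen[OF Q aa, of "cnj b" "b*z"] by (simp add: mult.assoc)
  qed
  also have "\<dots> = (b * cnj b) * z" by (simp add: algebra_simps)
  also have "\<dots> = z" using bb by simp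
  finally show ?thesis .
qed

lemma mob_inv_params:
  assumes "cmod a < 1" "cmod b = 1"
  shows "cmod (-(cnj b*a)) < 1" "cmod (cnj b) = 1"
  using assms by (auto simp: norm_mult)

lemma mob_inv':
  assumes "cmod a < 1" "cmod b = 1" "cmod z < 1"
  shows "mob a b (mob (-(cnj b*a)) (cnj b) z) = z"
proof -
  have bb: "b * cnj b = 1" using assms complex_norm_square[of b] by simp
  have "mob (-(cnj (cnj b)*(-(cnj b*a)))) (cnj (cnj b)) (mob (-(cnj b*a)) (cnj b) z) = z"
    by (rule mob_inv) (use assms in \<open>auto simp: norm_mult\<close>)
  moreover have "b * (cnj b * a) = a" by (metis bb mult.assoc mult_1)
  ultimately show ?thesis by simp
qed

lemma mob_lip:
  assumes "cmod a < 1" "cmod b = 1" "cmod x < 1" "cmod y < 1"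
  shows "cmod (mob a b x - mob a b y) \<le> 2/(1 - cmod a) * cmod (x - y)"
proof -
  let ?Qx = "1+b*cnj a*x" and ?Qy = "1+b*cnj a*y"
  have Qx: "?Qx \<noteq> 0" and Qy: "?Qy \<noteq> 0" using mob_den_nz[OF assms(1,2)] assms(3,4) by auto
  have gx: "cmod ?Qx \<ge> 1 - cmod a" and gy: "cmod ?Qy \<ge> 1 - cmod a"
    using mob_den_ge[OF assms(2)] assms(3,4) by auto
  have bb: "b * cnj b = 1" using assms complex_norm_square[of b] by simp
  have "mob a b x - mob a b y = b*(1 - a*cnj a)*(x-y)/(?Qx*?Qy)"
    using Qx Qy by (simp add: mob_def field_simps)
  then have "cmod (mob a b x - mob a b y) = cmod (1 - a*cnj a) * cmod (x-y)/(cmod ?Qx * cmod ?Qy)"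
    using assms(2) by (simp add: norm_mult norm_divide)
  also have l: "(cmod a)^2 < 1" using assms(1) abs_square_less_1 by fastforce
  have "cmod (1 - a*cnj a) = 1 - (cmod a)^2"
    by (simp only: one_minus_acnj norm_of_real) (use l in simp)
  also have "(1 - (cmod a)^2) * cmod (x-y)/(cmod ?Qx * cmod ?Qy) \<le> (1 - (cmod a)^2) * cmod (x-y)/((1 - cmod a)*(1 - cmod a))"
    using assms(1) gx gy
      order_less_le_trans[of 0 "1 - cmod a" "cmod ?Qx"] order_less_le_trans[of 0 "1 - cmod a" "cmod ?Qy"]
    by (intro divide_left_mono mult_mono mult_nonneg_nonneg) (auto simp: abs_square_less_1 less_imp_le)
  also have "\<dots> = (1 + cmod a)/(1 - cmod a) * cmod (x-y)"
  proof -
    have "1 - (cmod a)^2 = (1 + cmod a)*(1 - cmod a)" by (simp add: power2_eq_square algebra_simps)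
    moreover have "1 - cmod a \<noteq> 0" using assms(1) by simp
    ultimately show ?thesis by simp
  qed
  also have "\<dots> \<le> 2/(1 - cmod a) * cmod (x-y)"
    using assms(1) by (intro mult_right_mono divide_right_mono) auto
  finally show ?thesis .
qed

lemma mob_param:
  assumes "cmod a \<le> A" "cmod a' \<le> A" "A < 1" "cmod b = 1" "cmod b' = 1" "cmod x < 1"
  shows "cmod (mob a b x - mob a' b' x) \<le> 4/(1-A)^2 * (cmod (a-a') + cmod (b-b'))"
proof -
  let ?N = "b*x+a" and ?N' = "b'*x+a'" and ?Q = "1+b*cnj a*x" and ?Q' = "1+b'*cnj a'*x"
  have g: "cmod ?Q \<ge> 1 - A" using mob_den_ge[OF assms(4), of x a] assms by auto
  have g': "cmod ?Q' \<ge> 1 - A" using mob_den_ge[OF assms(5), of x a'] assms by auto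
  have Qn: "?Q \<noteq> 0" "?Q' \<noteq> 0" using g g' assms(3) by auto
  have eq: "mob a b x - mob a' b' x = ((?N - ?N')*?Q' + ?N'*(?Q' - ?Q))/(?Q*?Q')"
    using Qn by (simp add: mob_def field_simps)
  have x1: "cmod x \<le> 1" using assms(6) by simp
  have "cmod (?N - ?N') = cmod ((b-b')*x + (a-a'))" by (simp add: algebra_simps)
  also have "\<dots> \<le> cmod (b-b') * cmod x + cmod (a-a')" by (metis norm_mult norm_triangle_ineq)
  also have "\<dots> \<le> cmod (b-b') + cmod (a-a')" using x1 by (simp add: mult_left_le)
  finally have dN: "cmod (?N - ?N') \<le> cmod (a-a') + cmod (b-b')" by simp
  have "cmod ?Q' \<le> 1 + cmod a' * cmod x" by (rule mob_den_le[OF assms(5)])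
  also have "\<dots> \<le> 2" using assms x1 mult_le_one[of "cmod a'" "cmod x"] by simp
  finally have Q'2: "cmod ?Q' \<le> 2" .
  have "cmod ?N' \<le> cmod (b'*x) + cmod a'" by (rule norm_triangle_ineq)
  also have "\<dots> \<le> 2" using assms x1 by (simp add: norm_mult)
  finally have N'2: "cmod ?N' \<le> 2" .
  have "cmod (?Q' - ?Q) = cmod (((b' - b)*cnj a' + b*(cnj a' - cnj a))*x)" by (simp add: algebra_simps)
  also have "\<dots> \<le> cmod ((b' - b)*cnj a' + b*(cnj a' - cnj a))" using x1 by (simp add: norm_mult mult_left_le)
  also have "\<dots> \<le> cmod (b'-b) * cmod a' + cmod (a' - a)"
    using assms(4) by (metis (no_types) complex_cnj_diff complex_mod_cnj mult_1 norm_mult norm_triangle_ineq)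
  also have "\<dots> \<le> cmod (b'-b) + cmod (a'-a)" using assms by (simp add: mult_left_le)
  finally have dQ: "cmod (?Q' - ?Q) \<le> cmod (a-a') + cmod (b-b')" by (simp add: norm_minus_commute)
  have "cmod ((?N - ?N')*?Q' + ?N'*(?Q' - ?Q)) \<le> cmod (?N - ?N') * cmod ?Q' + cmod ?N' * cmod (?Q' - ?Q)"
    by (metis norm_mult norm_triangle_ineq)
  also have "\<dots> \<le> (cmod (a-a') + cmod (b-b')) * 2 + 2 * (cmod (a-a') + cmod (b-b'))"
    by (intro add_mono mult_mono dN Q'2 N'2 dQ) auto
  finally have num: "cmod ((?N - ?N')*?Q' + ?N'*(?Q' - ?Q)) \<le> 4 * (cmod (a-a') + cmod (b-b'))" by simp
  have den: "cmod (?Q*?Q') \<ge> (1-A)^2"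
    using g g' assms(3) by (simp add: norm_mult power2_eq_square mult_mono)
  have "cmod (mob a b x - mob a' b' x) = cmod ((?N - ?N')*?Q' + ?N'*(?Q' - ?Q)) / cmod (?Q*?Q')"
    by (simp add: eq norm_divide)
  also have "\<dots> \<le> 4 * (cmod (a-a') + cmod (b-b')) / (1-A)^2"
    using num den assms(3) by (intro frac_le) auto
  finally show ?thesis by simp
qed


lemma mob_0: "mob a b 0 = a" by (simp add: mob_def)

lemma tau_self: "cmod p < 1 \<Longrightarrow> mob (-p) 1 p = 0" by (simp add: mob_def)

lemma tau_inv: "cmod p < 1 \<Longrightarrow> cmod z < 1 \<Longrightarrow> mob p 1 (mob (-p) 1 z) = z"
  using mob_inv'[of p 1 z] by simp

lemma tau_inv2: "cmod p < 1 \<Longrightarrow> cmod z < 1 \<Longrightarrow> mob (-p) 1 (mob p 1 z) = z"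
  using mob_inv[of p 1 z] by simp

lemma Schwarz_Pick:
  assumes holf: "f holomorphic_on ball 0 1" and fD: "\<And>z. cmod z < 1 \<Longrightarrow> cmod (f z) < 1"
    and x: "cmod x < 1" and y: "cmod y < 1"
  shows "cmod (mob (-(f y)) 1 (f x)) \<le> cmod (mob (-y) 1 x)"
proof -
  define G where "G = mob (-(f y)) 1 \<circ> f \<circ> mob y 1"
  have fy: "cmod (f y) < 1" using fD y by simp
  have my: "\<And>z. cmod z < 1 \<Longrightarrow> cmod (mob y 1 z) < 1" using mob_in_disk[of y 1] y by simp
  have hol: "G holomorphic_on ball 0 1"
    unfolding G_def
  proof (rule holomorphic_on_compose_gen[where t="ball 0 1"])
    show "mob (- f y) 1 \<circ> f holomorphic_on ball 0 1"
      by (rule holomorphic_on_compose_gen[where t="ball 0 1"]) (use mob_holo[of "-(f y)" 1] fy holf fD in auto)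
    show "mob y 1 holomorphic_on ball 0 1" using mob_holo[of y 1] y by simp
    show "mob y 1 ` ball 0 1 \<subseteq> ball 0 1" using my by auto
  qed
  have G0: "G 0 = 0" using fy by (simp add: G_def mob_0 mob_def)
  have GD: "\<And>z. cmod z < 1 \<Longrightarrow> cmod (G z) < 1"
    unfolding G_def using my fD mob_in_disk[of "-(f y)" 1] fy by simp
  have xi: "cmod (mob (-y) 1 x) < 1" using mob_in_disk[of "-y" 1 x] x y by simp
  have "cmod (G (mob (-y) 1 x)) \<le> cmod (mob (-y) 1 x)"
    by (rule Schwarz_Lemma(1)[OF hol G0 GD xi])
  moreover have "G (mob (-y) 1 x) = mob (-(f y)) 1 (f x)"
    using tau_inv[OF y x] by (simp add: G_def)
  ultimately show ?thesis by simp
qed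

lemma frac_mono_aux:
  fixes p r t :: real
  assumes "0 \<le> p" "p \<le> 1" "0 \<le> r" "r \<le> t"
  shows "(r+p)/(1+p*r) \<le> (t+p)/(1+p*t)"
proof -
  have d1: "1 + p*r > 0" "1+p*t > 0" using assms by (simp_all add: add_pos_nonneg)
  have "(r+p)*(1+p*t) \<le> (t+p)*(1+p*r)"
  proof -
    have "(t+p)*(1+p*r) - (r+p)*(1+p*t) = (t - r)*(1 - p*p)" by (simp add: algebra_simps)
    moreover have "(t - r)*(1 - p*p) \<ge> 0" using assms by (simp add: mult_le_one)
    ultimately show ?thesis by linarith
  qed
  then show ?thesis using d1 by (simp add: divide_simps)
qed

lemma disk_bound:
  assumes holf: "f holomorphic_on ball 0 1" and fD: "\<And>z. cmod z < 1 \<Longrightarrow> cmod (f z) < 1"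
    and x: "cmod x < 1"
  shows "cmod (f x) \<le> (cmod x + cmod (f 0))/(1 + cmod (f 0) * cmod x)"
proof -
  have f0: "cmod (f 0) < 1" using fD by simp
  have fx: "cmod (f x) < 1" using fD x by simp
  define v where "v = mob (-(f 0)) 1 (f x)"
  have v: "cmod v \<le> cmod x" using Schwarz_Pick[OF holf fD x, of 0] by (simp add: v_def mob_def)
  have vD: "cmod v < 1" using v x by simp
  have "f x = mob (f 0) 1 v" using tau_inv[OF f0 fx] by (simp add: v_def)
  then have "cmod (f x) \<le> (cmod v + cmod (f 0))/(1 + cmod (f 0) * cmod v)"
    using mob_bound[of "f 0" 1 v] f0 vD by simp
  also have "\<dots> \<le> (cmod x + cmod (f 0))/(1 + cmod (f 0) * cmod x)"
    by (rule frac_mono_aux) (use f0 v in auto)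
  finally show ?thesis .
qed


definition rS :: "real \<Rightarrow> real" where "rS R = (R + 1/2)/(1 + R/2)"
definition KS :: "real \<Rightarrow> real" where "KS R = 1 + 2 * rS R / (1 - rS R)"
definition CS :: "real \<Rightarrow> real" where "CS R = 4 + 8 * KS R"

lemma rS_bounds: "0 \<le> R \<Longrightarrow> R < 1 \<Longrightarrow> 0 \<le> rS R \<and> rS R < 1"
  unfolding rS_def by (auto simp: field_simps)

lemma KS_ge1: "0 \<le> R \<Longrightarrow> R < 1 \<Longrightarrow> KS R \<ge> 1"
  using rS_bounds[of R] unfolding KS_def by auto

lemma CS_ge4: "0 \<le> R \<Longrightarrow> R < 1 \<Longrightarrow> CS R \<ge> 4"
  using KS_ge1[of R] unfolding CS_def by auto

lemma cmod_half[simp]: "cmod (1/2::complex) = 1/2" by (metis norm_divide norm_numeral norm_one)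

lemma mob_tau_eq: "mob (-w) 1 x = (x - w)/(1 - cnj w * x)"
  by (simp add: mob_def)

lemma tau_shift_bound:
  assumes "cmod al \<le> 1/2" "cmod y < 1"
  shows "cmod (mob (-al) 1 y - y) \<le> 4 * cmod al"
proof -
  have den: "cmod (1 - cnj al * y) \<ge> 1/2"
  proof -
    have "cmod al * cmod y \<le> cmod al" by (rule mult_left_le) (use assms in auto)
    then have "cmod (cnj al * y) \<le> 1/2" using assms by (simp add: norm_mult)
    moreover have "cmod (1::complex) - cmod (cnj al * y) \<le> cmod (1 - cnj al * y)" by (rule norm_triangle_ineq2)
    ultimately show ?thesis by simp
  qed
  then have dn: "1 - cnj al * y \<noteq> 0" by auto
  have "mob (-al) 1 y - y = (cnj al * y * y - al)/(1 - cnj al * y)"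
    using dn by (simp add: mob_tau_eq field_simps)
  moreover have "cmod (cnj al * y * y - al) \<le> 2 * cmod al"
  proof -
    have "cmod (cnj al * y * y - al) \<le> cmod (cnj al * y * y) + cmod al" by (rule norm_triangle_ineq4)
    also have "cmod (cnj al * y * y) \<le> cmod al"
    proof -
      have "cmod y * cmod y \<le> 1" using assms by (simp add: mult_le_one)
      then have "cmod al * (cmod y * cmod y) \<le> cmod al" by (rule mult_left_le) simp
      then show ?thesis by (simp add: norm_mult mult.assoc)
    qed
    finally show ?thesis by simp
  qed
  ultimately have "cmod (mob (-al) 1 y - y) \<le> 2 * cmod al / (1/2)"
    using den by (simp only: norm_divide) (rule frac_le, auto)
  then show ?thesis by simp
qed

lemma q_bound:
  assumes holq: "q holomorphic_on ball 0 1" and qD: "\<And>z. cmod z < 1 \<Longrightarrow> cmod (q z) < 1"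
    and z: "cmod z \<le> R" and R: "0 \<le> R" "R < 1"
  shows "cmod (1 - q z) \<le> KS R * cmod (1 - q (1/2))"
proof -
  let ?c = "1/2 :: complex"
  define w where "w = q ?c" define x where "x = q z"
  have zD: "cmod z < 1" using z R by simp
  have w1: "cmod w < 1" unfolding w_def using qD by simp
  have x1: "cmod x < 1" unfolding x_def using qD zD by simp
  have "cmod (mob (-w) 1 x) \<le> cmod (mob (-?c) 1 z)"
    unfolding w_def x_def by (rule Schwarz_Pick[OF holq qD zD]) (simp only: cmod_half, simp)
  also have "\<dots> \<le> (cmod z + 1/2)/(1 + 1/2 * cmod z)"
    using mob_bound[of "-?c" 1 z] zD by simp
  also have "\<dots> \<le> rS R" unfolding rS_def
    using frac_mono_aux[of "1/2" "cmod z" R] z by (simp add: mult.commute)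
  finally have rho: "cmod (mob (-w) 1 x) \<le> rS R" .
  let ?r = "rS R"
  have r: "0 \<le> ?r" "?r < 1" using rS_bounds[OF R] by auto
  have den: "1 - cnj w * x \<noteq> 0"
  proof -
    have "cmod w * cmod x \<le> cmod w" by (rule mult_left_le) (use x1 in auto)
    then have "cmod (cnj w * x) < 1" using w1 by (simp add: norm_mult)
    then show ?thesis by auto
  qed
  have "cmod (x - w) \<le> ?r * cmod (1 - cnj w * x)"
    using rho den by (simp add: mob_tau_eq norm_divide divide_le_eq)
  also have "cmod (1 - cnj w * x) \<le> (1 - (cmod w)^2) + cmod w * cmod (x - w)"
  proof -
    have "1 - cnj w * x = (1 - w * cnj w) + cnj w * (w - x)" by (simp add: algebra_simps)
    then have "cmod (1 - cnj w * x) \<le> cmod (1 - w * cnj w) + cmod (cnj w * (w - x))"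
      by (metis norm_triangle_ineq)
    also have "cmod (1 - w * cnj w) = 1 - (cmod w)^2"
    proof -
      have l: "(cmod w)^2 < 1" using w1 abs_square_less_1 by fastforce
      show ?thesis by (simp only: one_minus_acnj norm_of_real) (use l in simp)
    qed
    also have "cmod (cnj w * (w - x)) = cmod w * cmod (x - w)" by (simp add: norm_mult norm_minus_commute)
    finally show ?thesis .
  qed
  finally have "cmod (x - w) \<le> ?r * ((1 - (cmod w)^2) + cmod w * cmod (x - w))"
    using r(1) by (simp add: mult_left_mono)
  also have "\<dots> \<le> ?r * (1 - (cmod w)^2) + ?r * cmod (x - w)"
  proof -
    have "cmod w * cmod (x - w) \<le> cmod (x - w)" using w1 by (simp add: mult_left_le_one_le)
    then have "?r * (cmod w * cmod (x - w)) \<le> ?r * cmod (x - w)" using r(1) by (rule mult_left_mono)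
    then show ?thesis by (simp add: distrib_left)
  qed
  finally have "(1 - ?r) * cmod (x - w) \<le> ?r * (1 - (cmod w)^2)" by (simp add: algebra_simps)
  then have xw: "cmod (x - w) \<le> ?r * (1 - (cmod w)^2) / (1 - ?r)"
    using r by (simp add: field_simps)
  have "1 - (cmod w)^2 \<le> 2 * cmod (1 - w)"
  proof -
    have "1 - (cmod w)^2 = (1 - cmod w)*(1 + cmod w)" by (simp add: power2_eq_square algebra_simps)
    also have "\<dots> \<le> (1 - cmod w) * 2" using w1 by (intro mult_left_mono) auto
    also have "1 - cmod w \<le> cmod (1 - w)" by (metis norm_one norm_triangle_ineq2)
    finally show ?thesis by simp
  qed
  then have "?r * (1 - (cmod w)^2) / (1 - ?r) \<le> ?r * (2 * cmod (1 - w)) / (1 - ?r)"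
    using r by (intro divide_right_mono mult_left_mono) auto
  moreover have "?r * (2 * cmod (1 - w)) / (1 - ?r) = 2 * ?r / (1 - ?r) * cmod (1 - w)" by simp
  ultimately have xw2: "cmod (x - w) \<le> 2 * ?r / (1 - ?r) * cmod (1 - w)" using xw by linarith
  have "cmod (1 - x) \<le> cmod (1 - w) + cmod (x - w)"
  proof -
    have "1 - x = (1 - w) - (x - w)" by simp
    then show ?thesis by (metis norm_triangle_ineq4)
  qed
  with xw2 have "cmod (1 - x) \<le> cmod (1 - w) + 2 * ?r / (1 - ?r) * cmod (1 - w)" by linarith
  then show ?thesis unfolding KS_def x_def w_def by (simp add: algebra_simps)
qed

lemma selfmap_est:
  assumes holf: "f holomorphic_on ball 0 1" and fD: "\<And>z. cmod z < 1 \<Longrightarrow> cmod (f z) < 1"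
    and z: "cmod \<zeta> \<le> R" and R: "0 \<le> R" "R < 1"
  shows "cmod (f \<zeta> - \<zeta>) \<le> CS R * (cmod (f 0) + cmod (f (1/2) - 1/2))"
proof -
  let ?e = "cmod (f (1/2) - 1/2)"
  have CS4: "CS R \<ge> 4" and KS1: "KS R \<ge> 1" using CS_ge4[OF R] KS_ge1[OF R] by auto
  have zD: "cmod \<zeta> < 1" using z R by simp
  have sumnn: "0 \<le> cmod (f 0) + ?e" by simp
  show ?thesis
  proof (cases "\<zeta> = 0")
    case True
    have "cmod (f \<zeta> - \<zeta>) \<le> 1 * (cmod (f 0) + ?e)" using True by simp
    also have "\<dots> \<le> CS R * (cmod (f 0) + ?e)" using CS4 sumnn by (intro mult_right_mono) auto
    finally show ?thesis .
  next
    case znz: False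
    show ?thesis
    proof (cases "cmod (f 0) \<ge> 1/2")
      case True
      have "cmod (f \<zeta> - \<zeta>) \<le> cmod (f \<zeta>) + cmod \<zeta>" by (rule norm_triangle_ineq4)
      also have "\<dots> \<le> 2" using fD[OF zD] zD by simp
      also have "\<dots> \<le> 4 * cmod (f 0)" using True by simp
      also have "\<dots> \<le> 4 * (cmod (f 0) + ?e)" by simp
      also have "\<dots> \<le> CS R * (cmod (f 0) + ?e)" using CS4 sumnn by (intro mult_right_mono) auto
      finally show ?thesis .
    next
      case False
      then have al: "cmod (f 0) \<le> 1/2" by simp
      have f0D: "cmod (f 0) < 1" using al by simp
      define g where "g = mob (-(f 0)) 1 \<circ> f"
      have holg: "g holomorphic_on ball 0 1" unfolding g_def
        by (rule holomorphic_on_compose_gen[where t="ball 0 1"]) (use holf fD mob_holo[of "-(f 0)" 1] f0D in auto)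
      have g0: "g 0 = 0" by (simp add: g_def mob_def)
      have gD: "\<And>z. cmod z < 1 \<Longrightarrow> cmod (g z) < 1"
        unfolding g_def using fD mob_in_disk[of "-(f 0)" 1] f0D by simp
      have gf: "\<And>x. cmod x < 1 \<Longrightarrow> cmod (g x - f x) \<le> 4 * cmod (f 0)"
        unfolding g_def using tau_shift_bound[OF al] fD by simp
      define q where "q = (\<lambda>z. if z = 0 then deriv g 0 else (g z - g 0)/(z - 0))"
      have holq: "q holomorphic_on ball 0 1" unfolding q_def by (rule pole_lemma_open[OF holg]) simp
      have qz: "\<And>z. z \<noteq> 0 \<Longrightarrow> g z = z * q z" by (simp add: q_def g0)
      have q1: "\<And>x. cmod x < 1 \<Longrightarrow> cmod (q x) \<le> 1"
      proof -
        fix x :: complex assume x: "cmod x < 1"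
        show "cmod (q x) \<le> 1"
        proof (cases "x = 0")
          case True then show ?thesis using Schwarz_Lemma(2)[OF holg g0 gD x] by (simp add: q_def)
        next
          case False
          have "cmod (g x) \<le> cmod x" by (rule Schwarz_Lemma(1)[OF holg g0 gD x])
          then have "cmod x * cmod (q x) \<le> cmod x * 1" using qz[OF False] by (simp add: norm_mult)
          then show ?thesis using False by (simp add: mult_le_cancel_left_pos)
        qed
      qed
      have cnz: "(1/2::complex) \<noteq> 0" by simp
      have key: "cmod (1 - q \<zeta>) \<le> KS R * cmod (1 - q (1/2))"
      proof (cases "\<exists>x. cmod x < 1 \<and> cmod (q x) = 1")
        case True
        then obtain x where x: "cmod x < 1" "cmod (q x) = 1" by blast
        have "(\<exists>z. cmod z < 1 \<and> z \<noteq> 0 \<and> cmod (g z) = cmod z) \<or> cmod (deriv g 0) = 1"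
        proof (cases "x = 0")
          case True then show ?thesis using x by (simp add: q_def)
        next
          case False then show ?thesis using x qz[OF False] by (auto simp: norm_mult)
        qed
        then obtain \<beta> where \<beta>: "\<And>z. cmod z < 1 \<Longrightarrow> g z = \<beta> * z"
          using Schwarz_Lemma(3)[OF holg g0 gD zD] by blast
        have qb: "\<And>z. z \<noteq> 0 \<Longrightarrow> cmod z < 1 \<Longrightarrow> q z = \<beta>"
          using \<beta> by (simp add: q_def g0)
        have "q \<zeta> = q (1/2)" using qb[OF znz zD] qb[OF cnz] by simp
        then show ?thesis using KS1 by (simp add: mult_le_cancel_right1)
      next
        case False
        have qD: "\<And>z. cmod z < 1 \<Longrightarrow> cmod (q z) < 1"
          using False q1 by (meson order_le_less)
        show ?thesis by (rule q_bound[OF holq qD z R])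
      qed
      have qc: "cmod (1 - q (1/2)) \<le> 2 * ?e + 8 * cmod (f 0)"
      proof -
        have "q (1/2) = 2 * g (1/2)" by (simp add: q_def g0)
        then have "1 - q (1/2) = 2 * ((1/2 - f (1/2)) + (f (1/2) - g (1/2)))" by (simp add: algebra_simps)
        then have "cmod (1 - q (1/2)) = 2 * cmod ((1/2 - f (1/2)) + (f (1/2) - g (1/2)))"
          by (simp only: norm_mult) simp
        also have "\<dots> \<le> 2 * (cmod (1/2 - f (1/2)) + cmod (f (1/2) - g (1/2)))"
          by (rule mult_left_mono[OF norm_triangle_ineq]) simp
        also have "cmod (f (1/2) - g (1/2)) \<le> 4 * cmod (f 0)"
          using gf[of "1/2"] by (simp only: cmod_half norm_minus_commute)
        finally show ?thesis by (simp add: norm_minus_commute)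
      qed
      have gz: "cmod (g \<zeta> - \<zeta>) \<le> cmod (1 - q \<zeta>)"
      proof -
        have "g \<zeta> - \<zeta> = \<zeta> * (q \<zeta> - 1)" using qz[OF znz] by (simp add: algebra_simps)
        then have "cmod (g \<zeta> - \<zeta>) = cmod \<zeta> * cmod (1 - q \<zeta>)" by (simp add: norm_mult norm_minus_commute)
        also have "\<dots> \<le> cmod (1 - q \<zeta>)" using zD by (simp add: mult_left_le_one_le)
        finally show ?thesis .
      qed
      have "cmod (f \<zeta> - \<zeta>) \<le> cmod (f \<zeta> - g \<zeta>) + cmod (g \<zeta> - \<zeta>)"
        by (metis diff_add_cancel norm_triangle_ineq add_diff_eq)
      also have "\<dots> \<le> 4 * cmod (f 0) + KS R * (2 * ?e + 8 * cmod (f 0))"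
      proof (rule add_mono)
        show "cmod (f \<zeta> - g \<zeta>) \<le> 4 * cmod (f 0)" using gf[OF zD] by (simp add: norm_minus_commute)
        have "cmod (g \<zeta> - \<zeta>) \<le> KS R * cmod (1 - q (1/2))" using gz key by linarith
        also have "\<dots> \<le> KS R * (2 * ?e + 8 * cmod (f 0))" using KS1 qc by (intro mult_left_mono) auto
        finally show "cmod (g \<zeta> - \<zeta>) \<le> KS R * (2 * ?e + 8 * cmod (f 0))" .
      qed
      also have "\<dots> \<le> CS R * (cmod (f 0) + ?e)"
        using KS1 unfolding CS_def by (simp add: algebra_simps)
      finally show ?thesis .
    qed
  qed
qed


lemma set_integrable_iff_on:
  fixes F :: "real \<Rightarrow> real"
  assumes "S \<in> sets lebesgue"
  shows "set_integrable lebesgue S F \<longleftrightarrow> integrable (lebesgue_on S) F"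
  unfolding set_integrable_def using integrable_restrict_space[of S lebesgue F] assms by simp

lemma const_integrable_Icc: "integrable (lebesgue_on {a..b}) (\<lambda>x::real. c::real)"
  using continuous_imp_integrable[of a b "\<lambda>x::real. c"] by simp

lemma Lp_on_integrable:
  fixes f :: "real \<Rightarrow> real"
  assumes d: "1 \<le> d" and L: "Lp_on d {a..b} f"
  shows "integrable (lebesgue_on {a..b}) f"
proof -
  have meas: "f \<in> borel_measurable (lebesgue_on {a..b})" using L by (simp add: Lp_on_def)
  show ?thesis
  proof (cases "d = \<infinity>")
    case True
    then obtain C where C: "AE x in lebesgue_on {a..b}. norm (f x) \<le> C" using L by (auto simp: Lp_on_def)
    show ?thesis
    proof (rule Bochner_Integration.integrable_bound[OF const_integrable_Icc[of a b C] meas])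
      show "AE x in lebesgue_on {a..b}. norm (f x) \<le> norm C"
        using C by eventually_elim auto
    qed
  next
    case False
    define p where "p = real_of_ereal d"
    have p1: "1 \<le> p" using d False unfolding p_def
      by (cases d) auto
    have int: "integrable (lebesgue_on {a..b}) (\<lambda>x. norm (f x) powr p)"
      using L False by (simp add: Lp_on_def p_def set_integrable_iff_on)
    have "integrable (lebesgue_on {a..b}) (\<lambda>x. 1 + norm (f x) powr p)"
      by (rule Bochner_Integration.integrable_add[OF const_integrable_Icc int])
    then show ?thesis
    proof (rule Bochner_Integration.integrable_bound[OF _ meas])
      show "AE x in lebesgue_on {a..b}. norm (f x) \<le> norm (1 + norm (f x) powr p)"
      proof (intro AE_I2)
        fix x
        have "norm (f x) \<le> 1 + norm (f x) powr p"
        proof (cases "norm (f x) \<le> 1")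
          case True then show ?thesis using powr_ge_zero[of "norm (f x)" p] by linarith
        next
          case False
          then have "norm (f x) powr 1 \<le> norm (f x) powr p" using p1 by (intro powr_mono) auto
          then show ?thesis using False by simp
        qed
        then show "norm (f x) \<le> norm (1 + norm (f x) powr p)" by simp
      qed
    qed
  qed
qed

lemma Lp_on_integrable_on:
  fixes f :: "real \<Rightarrow> real"
  assumes "1 \<le> d" "Lp_on d {a..b} f" "{u..t} \<subseteq> {a..b}"
  shows "f integrable_on {u..t}"
  using integrable_subinterval_real[OF integrable_on_lebesgue_on[OF Lp_on_integrable[OF assms(1,2)]] assms(3)]
  by simp

lemma powr_add_le:
  fixes x y p :: real
  assumes "0 \<le> x" "0 \<le> y" "0 \<le> p"
  shows "(x + y) powr p \<le> 2 powr p * (x powr p + y powr p)"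
proof -
  have "(x + y) powr p \<le> (2 * max x y) powr p"
    using assms by (intro powr_mono2) auto
  also have "\<dots> = 2 powr p * (max x y) powr p" using assms by (simp add: powr_mult)
  also have "(max x y) powr p \<le> x powr p + y powr p"
    by (cases "x \<le> y") (auto simp: max_def)
  then have "2 powr p * (max x y) powr p \<le> 2 powr p * (x powr p + y powr p)"
    by (intro mult_left_mono) auto
  finally show ?thesis .
qed

lemma Lp_on_add:
  fixes f g :: "real \<Rightarrow> real"
  assumes d: "1 \<le> d" and S: "S \<in> sets lebesgue" and f: "Lp_on d S f" and g: "Lp_on d S g"
  shows "Lp_on d S (\<lambda>x. f x + g x)"
proof -
  have mf: "f \<in> borel_measurable (lebesgue_on S)" and mg: "g \<in> borel_measurable (lebesgue_on S)"
    using f g by (auto simp: Lp_on_def)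
  have m: "(\<lambda>x. f x + g x) \<in> borel_measurable (lebesgue_on S)" using mf mg by measurable
  show ?thesis
  proof (cases "d = \<infinity>")
    case True
    then obtain C1 C2 where C1: "AE x in lebesgue_on S. norm (f x) \<le> C1"
      and C2: "AE x in lebesgue_on S. norm (g x) \<le> C2" using f g by (auto simp: Lp_on_def)
    have "AE x in lebesgue_on S. norm (f x + g x) \<le> C1 + C2"
      using C1 C2 by eventually_elim (rule order_trans[OF norm_triangle_ineq add_mono])
    then show ?thesis using True m by (auto simp: Lp_on_def)
  next
    case False
    define p where "p = real_of_ereal d"
    have p0: "0 \<le> p" using d False unfolding p_def by (cases d) auto
    have intf: "integrable (lebesgue_on S) (\<lambda>x. norm (f x) powr p)"
      and intg: "integrable (lebesgue_on S) (\<lambda>x. norm (g x) powr p)"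
      using f g False S by (auto simp: Lp_on_def p_def set_integrable_iff_on)
    have "integrable (lebesgue_on S) (\<lambda>x. 2 powr p * (norm (f x) powr p + norm (g x) powr p))"
      using intf intg by (intro Bochner_Integration.integrable_mult_right Bochner_Integration.integrable_add) auto
    then have "integrable (lebesgue_on S) (\<lambda>x. norm (f x + g x) powr p)"
    proof (rule Bochner_Integration.integrable_bound)
      show "(\<lambda>x. norm (f x + g x) powr p) \<in> borel_measurable (lebesgue_on S)" using m by measurable
      show "AE x in lebesgue_on S. norm (norm (f x + g x) powr p) \<le> norm (2 powr p * (norm (f x) powr p + norm (g x) powr p))"
      proof (intro AE_I2)
        fix x
        have "norm (f x + g x) powr p \<le> (norm (f x) + norm (g x)) powr p"
          using p0 by (intro powr_mono2 norm_triangle_ineq) auto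
        also have "\<dots> \<le> 2 powr p * (norm (f x) powr p + norm (g x) powr p)"
          using p0 by (intro powr_add_le) auto
        finally show "norm (norm (f x + g x) powr p) \<le> norm (2 powr p * (norm (f x) powr p + norm (g x) powr p))"
          by simp
      qed
    qed
    then show ?thesis using False m S by (simp add: Lp_on_def p_def set_integrable_iff_on)
  qed
qed

lemma Lp_on_cmult:
  fixes f :: "real \<Rightarrow> real"
  assumes d: "1 \<le> d" and S: "S \<in> sets lebesgue" and f: "Lp_on d S f"
  shows "Lp_on d S (\<lambda>x. c * f x)"
proof -
  have mf: "f \<in> borel_measurable (lebesgue_on S)" using f by (auto simp: Lp_on_def)
  have m: "(\<lambda>x. c * f x) \<in> borel_measurable (lebesgue_on S)" using mf by measurable
  show ?thesis
  proof (cases "d = \<infinity>")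
    case True
    then obtain C where C: "AE x in lebesgue_on S. norm (f x) \<le> C" using f by (auto simp: Lp_on_def)
    have "AE x in lebesgue_on S. norm (c * f x) \<le> \<bar>c\<bar> * C"
      using C by eventually_elim (simp add: abs_mult mult_left_mono)
    then show ?thesis using True m by (auto simp: Lp_on_def)
  next
    case False
    define p where "p = real_of_ereal d"
    have intf: "integrable (lebesgue_on S) (\<lambda>x. norm (f x) powr p)"
      using f False S by (auto simp: Lp_on_def p_def set_integrable_iff_on)
    have "integrable (lebesgue_on S) (\<lambda>x. \<bar>c\<bar> powr p * norm (f x) powr p)"
      using intf by (intro Bochner_Integration.integrable_mult_right) auto
    moreover have "(\<lambda>x. norm (c * f x) powr p) = (\<lambda>x. \<bar>c\<bar> powr p * norm (f x) powr p)"
      by (rule ext) (simp add: abs_mult powr_mult)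
    ultimately have "integrable (lebesgue_on S) (\<lambda>x. norm (c * f x) powr p)" by (simp only:)
    then show ?thesis using False m S by (simp add: Lp_on_def p_def set_integrable_iff_on)
  qed
qed

lemma Lp_on_norm:
  fixes g :: "real \<Rightarrow> complex"
  assumes "Lp_on d S g"
  shows "Lp_on d S (\<lambda>x. norm (g x))"
  using assms unfolding Lp_on_def by (auto intro: borel_measurable_norm)


lemma frac_mono2:
  fixes p p2 r r2 :: real
  assumes "0 \<le> p" "p \<le> p2" "p2 \<le> 1" "0 \<le> r" "r \<le> r2" "r2 \<le> 1"
  shows "(r+p)/(1+p*r) \<le> (r2+p2)/(1+p2*r2)"
proof -
  have "(r+p)/(1+p*r) \<le> (r2+p)/(1+p*r2)" using assms by (intro frac_mono_aux) auto
  also have "\<dots> = (p+r2)/(1+r2*p)" by (simp add: algebra_simps)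
  also have "\<dots> \<le> (p2+r2)/(1+r2*p2)" using assms by (intro frac_mono_aux) auto
  also have "\<dots> = (r2+p2)/(1+p2*r2)" by (simp add: algebra_simps)
  finally show ?thesis .
qed

lemma frac_lt1:
  fixes p r :: real
  assumes "0 \<le> p" "p < 1" "0 \<le> r" "r < 1"
  shows "(r+p)/(1+p*r) < 1" "0 \<le> (r+p)/(1+p*r)"
proof -
  have "0 < (1 - p)*(1 - r)" using assms by (simp add: mult_pos_pos)
  then have "r + p < 1 + p*r" by (simp add: algebra_simps)
  moreover have "1 + p*r > 0" using assms by (simp add: add_pos_nonneg)
  ultimately show "(r+p)/(1+p*r) < 1" "0 \<le> (r+p)/(1+p*r)" using assms by auto
qed

definition EF1 where "EF1 \<psi> \<longleftrightarrow> (\<forall>s t. 0 \<le> s \<and> s \<le> t \<longrightarrow> \<psi> s t holomorphic_on unit_disk \<and> \<psi> s t ` unit_disk \<subseteq> unit_disk)"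

lemma EF_parts:
  assumes "evolution_family d \<psi>"
  shows "\<And>s t. 0 \<le> s \<Longrightarrow> s \<le> t \<Longrightarrow> \<psi> s t holomorphic_on unit_disk"
    and "\<And>s t z. 0 \<le> s \<Longrightarrow> s \<le> t \<Longrightarrow> cmod z < 1 \<Longrightarrow> cmod (\<psi> s t z) < 1"
    and "\<And>s z. 0 \<le> s \<Longrightarrow> cmod z < 1 \<Longrightarrow> \<psi> s s z = z"
    and "\<And>s u t z. 0 \<le> s \<Longrightarrow> s \<le> u \<Longrightarrow> u \<le> t \<Longrightarrow> cmod z < 1 \<Longrightarrow> \<psi> s t z = \<psi> u t (\<psi> s u z)"
    and "\<And>z T. cmod z < 1 \<Longrightarrow> T > 0 \<Longrightarrow> \<exists>k::real \<Rightarrow> real. (\<forall>x. 0 \<le> k x) \<and> Lp_on d {0..T} k \<and>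
        (\<forall>s u t. 0 \<le> s \<and> s \<le> u \<and> u \<le> t \<and> t \<le> T \<longrightarrow>
           norm (\<psi> s u z - \<psi> s t z) \<le> integral {u..t} k)"
  using assms unfolding evolution_family_def by (auto simp: subset_iff)

definition mm :: "nat \<Rightarrow> real" where
  "mm n = ((\<lambda>r. (r + 1/2)/(1 + 1/2 * r)) ^^ n) 0"

lemma mm_Suc: "mm (Suc n) = (mm n + 1/2)/(1 + 1/2 * mm n)"
  by (simp add: mm_def)

lemma mm_bounds: "0 \<le> mm n \<and> mm n < 1"
proof (induction n)
  case 0 then show ?case by (simp add: mm_def)
next
  case (Suc n)
  then show ?case using frac_lt1[of "1/2" "mm n"] by (simp add: mm_Suc)
qed

lemma psi_origin_bound:
  assumes d: "1 \<le> d" and EF: "evolution_family d \<psi>" and T: "T > 0"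
  shows "\<exists>R0. 0 \<le> R0 \<and> R0 < 1 \<and> (\<forall>s u. 0 \<le> s \<and> s \<le> u \<and> u \<le> T \<longrightarrow> cmod (\<psi> s u 0) \<le> R0)"
proof -
  note E = EF_parts[OF EF]
  obtain k where k0: "\<forall>x. 0 \<le> k x" and kL: "Lp_on d {0..T} k"
    and kb: "\<forall>s u t. 0 \<le> s \<and> s \<le> u \<and> u \<le> t \<and> t \<le> T \<longrightarrow> norm (\<psi> s u 0 - \<psi> s t 0) \<le> integral {u..t} k"
    using E(5)[of 0 T] T by auto
  have kint: "k integrable_on {0..T}" using Lp_on_integrable_on[OF d kL] by simp
  define F where "F x = integral {0..x} k" for x
  have Fc: "continuous_on {0..T} F" unfolding F_def by (rule indefinite_integral_continuous_1[OF kint])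
  then have "uniformly_continuous_on {0..T} F" by (intro compact_uniformly_continuous) auto
  then obtain \<delta>0 where \<delta>0: "\<delta>0 > 0" and ucF: "\<And>x y. x \<in> {0..T} \<Longrightarrow> y \<in> {0..T} \<Longrightarrow> dist y x < \<delta>0 \<Longrightarrow> dist (F y) (F x) < 1/2"
    unfolding uniformly_continuous_on_def by (metis divide_pos_pos zero_less_numeral zero_less_one)
  define \<delta> where "\<delta> = \<delta>0 / 2"
  have \<delta>: "\<delta> > 0" using \<delta>0 by (simp add: \<delta>_def)
  have Fdiff: "integral {v..u} k = F u - F v" if "0 \<le> v" "v \<le> u" "u \<le> T" for u v
  proof -
    have "k integrable_on {0..u}" using kint that by (intro integrable_subinterval_real[OF kint]) auto
    then have "integral {0..v} k + integral {v..u} k = integral {0..u} k"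
      using that by (intro Henstock_Kurzweil_Integration.integral_combine) auto
    then show ?thesis unfolding F_def by simp
  qed
  have small: "cmod (\<psi> v u 0) \<le> 1/2" if "0 \<le> v" "v \<le> u" "u \<le> T" "u - v \<le> \<delta>" for u v
  proof -
    have "cmod (\<psi> v v 0 - \<psi> v u 0) \<le> integral {v..u} k" using kb that by auto
    moreover have "\<psi> v v 0 = 0" using E(3)[of v 0] that by simp
    moreover have "integral {v..u} k < 1/2"
    proof -
      have "dist (F u) (F v) < 1/2" using that \<delta>0 \<delta>_def by (intro ucF) (auto simp: dist_real_def)
      then show ?thesis using Fdiff[OF that(1-3)] unfolding dist_real_def by linarith
    qed
    ultimately show ?thesis by simp
  qed
  have ind: "\<forall>s u. 0 \<le> s \<and> s \<le> u \<and> u \<le> T \<and> u - s \<le> real n * \<delta> \<longrightarrow> cmod (\<psi> s u 0) \<le> mm n" for n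
  proof (induction n)
    case 0
    show ?case
    proof (intro allI impI)
      fix s u assume h: "0 \<le> s \<and> s \<le> u \<and> u \<le> T \<and> u - s \<le> real 0 * \<delta>"
      then have us: "u = s" by simp
      have "\<psi> s s 0 = 0" using E(3)[of s 0] h by simp
      then show "cmod (\<psi> s u 0) \<le> mm 0" unfolding us by (simp add: mm_def)
    qed
  next
    case (Suc n)
    show ?case
    proof (intro allI impI)
      fix s u assume h: "0 \<le> s \<and> s \<le> u \<and> u \<le> T \<and> u - s \<le> real (Suc n) * \<delta>"
      define v where "v = max s (u - \<delta>)"
      have v: "s \<le> v" "v \<le> u" "v - s \<le> real n * \<delta>" "u - v \<le> \<delta>"
        using h \<delta> by (auto simp: v_def algebra_simps)
      have x: "cmod (\<psi> s v 0) \<le> mm n" using Suc.IH h v by auto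
      have xD: "cmod (\<psi> s v 0) < 1" using x mm_bounds[of n] by simp
      have f0: "cmod (\<psi> v u 0) \<le> 1/2" using small[of v u] v h by auto
      have "\<psi> s u 0 = \<psi> v u (\<psi> s v 0)" using E(4)[of s v u 0] h v by auto
      also have "cmod (\<psi> v u (\<psi> s v 0)) \<le> (cmod (\<psi> s v 0) + cmod (\<psi> v u 0))/(1 + cmod (\<psi> v u 0) * cmod (\<psi> s v 0))"
        by (rule disk_bound[OF E(1) E(2) xD]) (use h v in auto)
      also have "\<dots> \<le> (mm n + 1/2)/(1 + 1/2 * mm n)"
        using x f0 mm_bounds[of n] by (intro frac_mono2) auto
      finally show "cmod (\<psi> s u 0) \<le> mm (Suc n)" by (simp add: mm_Suc)
    qed
  qed
  define N where "N = nat (ceiling (T / \<delta>))"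
  have TN: "T \<le> real N * \<delta>"
  proof -
    have "T / \<delta> \<le> real N" unfolding N_def by linarith
    then show ?thesis using \<delta> by (simp add: field_simps)
  qed
  show ?thesis
  proof (intro exI conjI allI impI)
    show "0 \<le> mm N" "mm N < 1" using mm_bounds by auto
    fix s u assume h: "0 \<le> s \<and> s \<le> u \<and> u \<le> T"
    then show "cmod (\<psi> s u 0) \<le> mm N" using ind[of N] TN by auto
  qed
qed


lemma in_disk_iff: "z \<in> unit_disk \<longleftrightarrow> cmod z < 1" by (simp add: dist_norm)

lemma main_lemma:
  fixes d :: ereal and \<psi> :: "real \<Rightarrow> real \<Rightarrow> complex \<Rightarrow> complex" and a b :: "real \<Rightarrow> complex"
  assumes d: "1 \<le> d" and EF: "evolution_family d \<psi>"
    and aD: "\<And>t. 0 \<le> t \<Longrightarrow> cmod (a t) < 1" and bS: "\<And>t. 0 \<le> t \<Longrightarrow> cmod (b t) = 1"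
    and ac: "\<And>T. continuous_on {0..T} a"
    and G: "\<And>T. T > 0 \<Longrightarrow> \<exists>K. (\<forall>x. 0 \<le> K x) \<and> Lp_on d {0..T} K \<and>
              (\<forall>u t. 0 \<le> u \<and> u \<le> t \<and> t \<le> T \<longrightarrow> cmod (a t - a u) + cmod (b t - b u) \<le> integral {u..t} K)"
  shows "evolution_family d (\<lambda>s t. mob (a t) (b t) \<circ> \<psi> s t \<circ> mob (-(cnj (b s) * a s)) (cnj (b s)))"
proof -
  note E = EF_parts[OF EF]
  define H where "H s = mob (-(cnj (b s) * a s)) (cnj (b s))" for s
  define h where "h t = mob (a t) (b t)" for t
  have HD: "\<And>s z. 0 \<le> s \<Longrightarrow> cmod z < 1 \<Longrightarrow> cmod (H s z) < 1"
    unfolding H_def using mob_in_disk mob_inv_params aD bS by metis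
  have hD: "\<And>s z. 0 \<le> s \<Longrightarrow> cmod z < 1 \<Longrightarrow> cmod (h s z) < 1"
    unfolding h_def using mob_in_disk aD bS by metis
  have Hh: "\<And>s z. 0 \<le> s \<Longrightarrow> cmod z < 1 \<Longrightarrow> H s (h s z) = z"
    unfolding H_def h_def using mob_inv aD bS by metis
  have hH: "\<And>s z. 0 \<le> s \<Longrightarrow> cmod z < 1 \<Longrightarrow> h s (H s z) = z"
    unfolding H_def h_def using mob_inv' aD bS by metis
  have Hhol: "\<And>s. 0 \<le> s \<Longrightarrow> H s holomorphic_on unit_disk"
    unfolding H_def using mob_holo mob_inv_params aD bS by metis
  have hhol: "\<And>s. 0 \<le> s \<Longrightarrow> h s holomorphic_on unit_disk"
    unfolding h_def using mob_holo aD bS by metis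
  define \<phi> where "\<phi> s t = h t \<circ> \<psi> s t \<circ> H s" for s t
  have goal_eq: "(\<lambda>s t. mob (a t) (b t) \<circ> \<psi> s t \<circ> mob (-(cnj (b s) * a s)) (cnj (b s))) = \<phi>"
    by (intro ext) (simp add: \<phi>_def h_def H_def)
  have P1: "\<forall>s t. 0 \<le> s \<and> s \<le> t \<longrightarrow> \<phi> s t holomorphic_on unit_disk \<and> \<phi> s t ` unit_disk \<subseteq> unit_disk"
  proof (intro allI impI conjI)
    fix s t :: real assume st: "0 \<le> s \<and> s \<le> t"
    show "\<phi> s t holomorphic_on unit_disk" unfolding \<phi>_def
    proof (rule holomorphic_on_compose_gen[where t=unit_disk])
      show "H s holomorphic_on unit_disk" using Hhol st by simp
      show "H s ` unit_disk \<subseteq> unit_disk" using HD st by (auto simp: in_disk_iff)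
      show "h t \<circ> \<psi> s t holomorphic_on unit_disk"
        by (rule holomorphic_on_compose_gen[where t=unit_disk]) (use E(1,2) hhol st in \<open>auto simp: in_disk_iff\<close>)
    qed
    show "\<phi> s t ` unit_disk \<subseteq> unit_disk" using HD hD E(2) st by (auto simp: \<phi>_def in_disk_iff)
  qed
  have P2: "\<forall>s\<ge>0. \<forall>z\<in>unit_disk. \<phi> s s z = z"
    using E(3) HD hH by (auto simp: \<phi>_def in_disk_iff)
  have P3: "\<forall>s u t. 0 \<le> s \<and> s \<le> u \<and> u \<le> t \<longrightarrow> (\<forall>z\<in>unit_disk. \<phi> s t z = \<phi> u t (\<phi> s u z))"
  proof (intro allI impI ballI)
    fix s u t :: real and z assume h1: "0 \<le> s \<and> s \<le> u \<and> u \<le> t" and z: "z \<in> unit_disk"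
    have w: "cmod (H s z) < 1" using HD h1 z by (simp add: in_disk_iff)
    have zeta: "cmod (\<psi> s u (H s z)) < 1" using E(2) w h1 by simp
    have "\<phi> u t (\<phi> s u z) = h t (\<psi> u t (H u (h u (\<psi> s u (H s z)))))" by (simp add: \<phi>_def)
    also have "\<dots> = h t (\<psi> u t (\<psi> s u (H s z)))" using Hh zeta h1 by simp
    also have "\<dots> = h t (\<psi> s t (H s z))" using E(4)[of s u t "H s z"] h1 w by simp
    finally show "\<phi> s t z = \<phi> u t (\<phi> s u z)" by (simp add: \<phi>_def)
  qed
  have P4: "\<forall>z\<in>unit_disk. \<forall>T>0. \<exists>k::real \<Rightarrow> real. (\<forall>x. 0 \<le> k x) \<and> Lp_on d {0..T} k \<and>
        (\<forall>s u t. 0 \<le> s \<and> s \<le> u \<and> u \<le> t \<and> t \<le> T \<longrightarrow>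
           norm (\<phi> s u z - \<phi> s t z) \<le> integral {u..t} k)"
  proof (intro ballI allI impI)
    fix z :: complex and T :: real
    assume z: "z \<in> unit_disk" and T: "T > 0"
    have zD: "cmod z < 1" using z by (simp add: in_disk_iff)
    obtain s0 where s0: "s0 \<in> {0..T}" and s0max: "\<And>s. s \<in> {0..T} \<Longrightarrow> cmod (a s) \<le> cmod (a s0)"
      using continuous_attains_sup[of "{0..T}" "\<lambda>s. cmod (a s)"] T continuous_on_norm[OF ac[of T]] by auto
    define A where "A = cmod (a s0)"
    have A: "0 \<le> A" "A < 1" using aD s0 by (auto simp: A_def)
    have aA: "\<And>s. s \<in> {0..T} \<Longrightarrow> cmod (a s) \<le> A" using s0max by (simp add: A_def)
    define R1 where "R1 = (cmod z + A)/(1 + A * cmod z)"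
    have R1: "0 \<le> R1" "R1 < 1" using frac_lt1[of A "cmod z"] A zD by (auto simp: R1_def)
    have wR1: "cmod (H s z) \<le> R1" if "s \<in> {0..T}" for s
    proof -
      have "cmod (H s z) \<le> (cmod z + cmod (-(cnj (b s) * a s)))/(1 + cmod (-(cnj (b s) * a s)) * cmod z)"
        unfolding H_def by (rule mob_bound) (use that aD bS zD mob_inv_params in auto)
      also have "\<dots> = (cmod z + cmod (a s))/(1 + cmod (a s) * cmod z)" using bS that by (simp add: norm_mult)
      also have "\<dots> \<le> R1" unfolding R1_def using aA[OF that] A zD by (intro frac_mono2) auto
      finally show ?thesis .
    qed
    obtain R0 where R0: "0 \<le> R0" "R0 < 1" and R0b: "\<And>s u. 0 \<le> s \<Longrightarrow> s \<le> u \<Longrightarrow> u \<le> T \<Longrightarrow> cmod (\<psi> s u 0) \<le> R0"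
      using psi_origin_bound[OF d EF T] by blast
    define R where "R = (R1 + R0)/(1 + R0 * R1)"
    have R: "0 \<le> R" "R < 1" using frac_lt1[of R0 R1] R0 R1 by (auto simp: R_def)
    have zetaR: "cmod (\<psi> s u w) \<le> R" if "0 \<le> s" "s \<le> u" "u \<le> T" "cmod w \<le> R1" for s u w
    proof -
      have wD: "cmod w < 1" using that R1 by simp
      have "cmod (\<psi> s u w) \<le> (cmod w + cmod (\<psi> s u 0))/(1 + cmod (\<psi> s u 0) * cmod w)"
        by (rule disk_bound[OF E(1) E(2) wD]) (use that in auto)
      also have "\<dots> \<le> R" unfolding R_def using that R0b[OF that(1-3)] R0 R1 by (intro frac_mono2) auto
      finally show ?thesis .
    qed
    obtain k0 where k00: "\<forall>x. 0 \<le> k0 x" and k0L: "Lp_on d {0..T} k0"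
      and k0b: "\<forall>s u t. 0 \<le> s \<and> s \<le> u \<and> u \<le> t \<and> t \<le> T \<longrightarrow> norm (\<psi> s u 0 - \<psi> s t 0) \<le> integral {u..t} k0"
      using E(5)[of 0 T] T by auto
    obtain kc where kc0: "\<forall>x. 0 \<le> kc x" and kcL: "Lp_on d {0..T} kc"
      and kcb: "\<forall>s u t. 0 \<le> s \<and> s \<le> u \<and> u \<le> t \<and> t \<le> T \<longrightarrow> norm (\<psi> s u (1/2) - \<psi> s t (1/2)) \<le> integral {u..t} kc"
      using E(5)[of "1/2" T] T by (auto simp only: cmod_half) auto
    obtain K where K0: "\<forall>x. 0 \<le> K x" and KL: "Lp_on d {0..T} K"
      and Kb: "\<forall>u t. 0 \<le> u \<and> u \<le> t \<and> t \<le> T \<longrightarrow> cmod (a t - a u) + cmod (b t - b u) \<le> integral {u..t} K"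
      using G[OF T] by auto
    define C where "C = CS R"
    define L where "L = 2/(1 - A)"
    define P where "P = 4/(1-A)^2"
    have C0: "C \<ge> 0" using CS_ge4[OF R] by (simp add: C_def)
    have L0: "L \<ge> 0" using A by (simp add: L_def)
    have P0: "P \<ge> 0" by (simp add: P_def)
    define k where "k x = L*C*k0 x + L*C*kc x + P*K x" for x
    show "\<exists>k::real \<Rightarrow> real. (\<forall>x. 0 \<le> k x) \<and> Lp_on d {0..T} k \<and>
        (\<forall>s u t. 0 \<le> s \<and> s \<le> u \<and> u \<le> t \<and> t \<le> T \<longrightarrow>
           norm (\<phi> s u z - \<phi> s t z) \<le> integral {u..t} k)"
    proof (rule exI[of _ k], intro conjI)
      show "\<forall>x. 0 \<le> k x" using k00 kc0 K0 C0 L0 P0 by (simp add: k_def)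
      have S: "{0..T} \<in> sets lebesgue" by simp
      show "Lp_on d {0..T} k" unfolding k_def
        by (intro Lp_on_add[OF d S] Lp_on_cmult[OF d S] k0L kcL KL)
      show "\<forall>s u t. 0 \<le> s \<and> s \<le> u \<and> u \<le> t \<and> t \<le> T \<longrightarrow>
           norm (\<phi> s u z - \<phi> s t z) \<le> integral {u..t} k"
      proof (intro allI impI)
      fix s u t :: real assume stu: "0 \<le> s \<and> s \<le> u \<and> u \<le> t \<and> t \<le> T"
      have sT: "s \<in> {0..T}" and uT: "u \<in> {0..T}" and tT: "t \<in> {0..T}" using stu by auto
      define w where "w = H s z"
      define \<zeta> where "\<zeta> = \<psi> s u w"
      define \<eta> where "\<eta> = \<psi> u t \<zeta>"
      have wD: "cmod w < 1" unfolding w_def using HD stu zD by simp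
      have wR: "cmod w \<le> R1" unfolding w_def using wR1[OF sT] .
      have zR: "cmod \<zeta> \<le> R" unfolding \<zeta>_def using zetaR[of s u w] stu wR by simp
      have zD2: "cmod \<zeta> < 1" using zR R by simp
      have eD: "cmod \<eta> < 1" unfolding \<eta>_def using E(2) stu zD2 by simp
      have e1: "\<phi> s u z = h u \<zeta>" by (simp add: \<phi>_def \<zeta>_def w_def)
      have e2: "\<phi> s t z = h t \<eta>"
        using E(4)[of s u t w] stu wD by (simp add: \<phi>_def \<eta>_def \<zeta>_def w_def)
      have int0: "k0 integrable_on {u..t}" and intc: "kc integrable_on {u..t}" and intK: "K integrable_on {u..t}"
        using Lp_on_integrable_on[OF d k0L] Lp_on_integrable_on[OF d kcL] Lp_on_integrable_on[OF d KL] stu by auto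
      have b0: "cmod (\<psi> u t 0) \<le> integral {u..t} k0"
        using k0b[rule_format, of u u t] E(3)[of u 0] stu by auto
      have bc: "cmod (\<psi> u t (1/2) - 1/2) \<le> integral {u..t} kc"
        using kcb[rule_format, of u u t] E(3)[of u "1/2"] stu by (auto simp: norm_minus_commute)
      have bK: "cmod (a u - a t) + cmod (b u - b t) \<le> integral {u..t} K"
      proof -
        have "cmod (a t - a u) + cmod (b t - b u) \<le> integral {u..t} K" using Kb stu by auto
        moreover have "cmod (a t - a u) = cmod (a u - a t)" "cmod (b t - b u) = cmod (b u - b t)"
          by (rule norm_minus_commute)+
        ultimately show ?thesis by simp
      qed
      have self: "cmod (\<eta> - \<zeta>) \<le> C * (cmod (\<psi> u t 0) + cmod (\<psi> u t (1/2) - 1/2))"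
        unfolding \<eta>_def C_def by (rule selfmap_est[OF E(1) E(2) zR R]) (use stu in auto)
      have lip: "cmod (h u \<zeta> - h u \<eta>) \<le> L * cmod (\<zeta> - \<eta>)"
      proof -
        have "cmod (h u \<zeta> - h u \<eta>) \<le> 2/(1 - cmod (a u)) * cmod (\<zeta> - \<eta>)"
          unfolding h_def by (rule mob_lip) (use aD bS stu zD2 eD in auto)
        also have "\<dots> \<le> L * cmod (\<zeta> - \<eta>)" unfolding L_def
          using aA[OF uT] A aD[of u] stu by (intro mult_right_mono divide_left_mono) auto
        finally show ?thesis .
      qed
      have par: "cmod (h u \<eta> - h t \<eta>) \<le> P * (cmod (a u - a t) + cmod (b u - b t))"
        unfolding h_def P_def by (rule mob_param) (use aA uT tT A bS stu eD in auto)
      have "norm (\<phi> s u z - \<phi> s t z) = cmod (h u \<zeta> - h t \<eta>)" by (simp add: e1 e2)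
      also have "\<dots> \<le> cmod (h u \<zeta> - h u \<eta>) + cmod (h u \<eta> - h t \<eta>)"
        by (rule norm_diff_triangle_ineq[of "h u \<zeta>" "h u \<eta>" "h u \<eta>" "h t \<eta>", simplified])
      also have "\<dots> \<le> L * (C * (integral {u..t} k0 + integral {u..t} kc)) + P * integral {u..t} K"
      proof (rule add_mono)
        have "cmod (\<zeta> - \<eta>) \<le> C * (integral {u..t} k0 + integral {u..t} kc)"
          using self b0 bc C0 by (smt (verit, best) mult_left_mono norm_minus_commute)
        then show "cmod (h u \<zeta> - h u \<eta>) \<le> L * (C * (integral {u..t} k0 + integral {u..t} kc))"
          using lip L0 by (smt (verit, best) mult_left_mono)
        show "cmod (h u \<eta> - h t \<eta>) \<le> P * integral {u..t} K"
          using par bK P0 by (smt (verit, best) mult_left_mono)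
      qed
      also have "\<dots> = integral {u..t} k"
      proof -
        have i0: "(\<lambda>x. L*C*k0 x) integrable_on {u..t}" and ic: "(\<lambda>x. L*C*kc x) integrable_on {u..t}"
          and iK: "(\<lambda>x. P*K x) integrable_on {u..t}"
          using int0 intc intK by (auto intro: integrable_on_mult_right)
        have "integral {u..t} k = integral {u..t} (\<lambda>x. L*C*k0 x + L*C*kc x) + integral {u..t} (\<lambda>x. P*K x)"
          unfolding k_def by (rule Henstock_Kurzweil_Integration.integral_add[OF integrable_add[OF i0 ic] iK])
        also have "integral {u..t} (\<lambda>x. L*C*k0 x + L*C*kc x) = integral {u..t} (\<lambda>x. L*C*k0 x) + integral {u..t} (\<lambda>x. L*C*kc x)"
          by (rule Henstock_Kurzweil_Integration.integral_add[OF i0 ic])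
        finally show ?thesis by (simp add: algebra_simps)
      qed
      finally show "norm (\<phi> s u z - \<phi> s t z) \<le> integral {u..t} k" .
      qed
    qed
  qed
  show ?thesis unfolding goal_eq evolution_family_def using P1 P2 P3 P4 by blast
qed


lemma det_scale1: "det (matrix ((*\<^sub>R) c) :: real^1^1) = c"
  by (simp add: matrix_def det_1 scaleR_vec_def)

lemma has_integral_vec1_transfer:
  fixes G :: "real \<Rightarrow> real"
  assumes "(G has_integral I) S"
  shows "((\<lambda>y::real^1. G (y$1)) has_integral I) (vec ` S)"
proof -
  have "(((\<lambda>y::real^1. G (y$1)) \<circ> vec) has_integral I) ((\<lambda>x::real^1. x$1) ` (vec ` S))"
    using assms by (simp add: o_def image_image)
  then show ?thesis by (rule has_integral_vec1_D)
qed

lemma vec_image_lmeasurable: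
  fixes A :: "real set"
  assumes "(vec ` A :: (real^1) set) \<in> lmeasurable"
  shows "A \<in> lmeasurable" "measure lebesgue (vec ` A :: (real^1) set) = measure lebesgue A"
proof -
  have "((\<lambda>x::real^1. 1::real) has_integral measure lebesgue (vec ` A :: (real^1) set)) (vec ` A)"
    using assms lmeasure_integral[OF assms] lmeasurable_iff_integrable_on by (metis has_integral_integral)
  from has_integral_vec1_I[OF this]
  have "((\<lambda>x::real. 1::real) has_integral measure lebesgue (vec ` A :: (real^1) set)) A"
    by (simp add: o_def image_image)
  then show "A \<in> lmeasurable" "measure lebesgue (vec ` A :: (real^1) set) = measure lebesgue A"
    using lmeasurable_iff_integrable_on lmeasure_integral integral_unique by (metis integrable_on_def)+
qed

lemma image_measure_bound:
  fixes \<phi> \<phi>' G :: "real \<Rightarrow> real"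
  assumes S: "S \<in> sets lebesgue" and der: "\<And>x. x \<in> S \<Longrightarrow> (\<phi> has_real_derivative \<phi>' x) (at x within S)"
    and G: "G integrable_on S" and bnd: "\<And>x. x \<in> S \<Longrightarrow> \<bar>\<phi>' x\<bar> \<le> G x"
  shows "\<phi> ` S \<in> lmeasurable \<and> measure lebesgue (\<phi> ` S) \<le> integral S G"
proof -
  let ?S1 = "vec ` S :: (real^1) set"
  let ?\<Phi> = "\<lambda>y::real^1. (vec (\<phi> (y$1)) :: real^1)"
  have S1: "?S1 \<in> sets lebesgue"
    by (auto intro: differentiable_image_in_sets_lebesgue [OF S] differentiable_vec)
  have der1: "(?\<Phi> has_derivative (*\<^sub>R) (\<phi>' (y$1))) (at y within ?S1)" if yS: "y \<in> ?S1" for y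
  proof -
    obtain a where a: "a \<in> S" "y = vec a" using yS by blast
    have "(\<phi> has_derivative (\<lambda>x. x * \<phi>' a)) (at a within S)"
    proof -
      have "(\<lambda>x. x * \<phi>' a) = (*) (\<phi>' a)" by (rule ext) (simp add: mult.commute)
      then show ?thesis using der[OF a(1)] unfolding has_field_derivative_def by simp
    qed
    from has_derivative_vector_1[of \<phi> \<phi>' a S, OF this] show ?thesis using a by simp
  qed
  have Gint1: "(\<lambda>y::real^1. G (y$1)) integrable_on ?S1"
    using has_integral_vec1_transfer[OF integrable_integral[OF G]] by blast
  have Gint1v: "integral ?S1 (\<lambda>y::real^1. G (y$1)) = integral S G"
    using has_integral_vec1_transfer[OF integrable_integral[OF G]] by (rule integral_unique)
  have meas: "(\<lambda>y. det (matrix ((*\<^sub>R) (\<phi>' (y$1))) :: real^1^1)) \<in> borel_measurable (lebesgue_on ?S1)"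
    by (rule borel_measurable_det_Jacobian[OF S1 der1])
  then have meas': "(\<lambda>y::real^1. \<bar>\<phi>' (y$1)\<bar>) \<in> borel_measurable (lebesgue_on ?S1)"
    by (simp add: det_scale1)
  have int1: "(\<lambda>y::real^1. \<bar>\<phi>' (y$1)\<bar>) integrable_on ?S1"
    by (rule measurable_bounded_by_integrable_imp_integrable_real[OF meas' Gint1 _ S1]) (use bnd in auto)
  have int1': "(\<lambda>y. \<bar>det (matrix ((*\<^sub>R) (\<phi>' (y$1))) :: real^1^1)\<bar>) integrable_on ?S1"
    using int1 by (simp add: det_scale1)
  have img: "?\<Phi> ` ?S1 = vec ` (\<phi> ` S)" by (auto simp: image_image)
  have L: "?\<Phi> ` ?S1 \<in> lmeasurable"
    and M: "measure lebesgue (?\<Phi> ` ?S1) \<le> integral ?S1 (\<lambda>y. \<bar>det (matrix ((*\<^sub>R) (\<phi>' (y$1))) :: real^1^1)\<bar>)"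
    using measurable_differentiable_image[OF S1 der1 int1'] measure_differentiable_image[OF S1 der1 int1'] by auto
  have "integral ?S1 (\<lambda>y. \<bar>det (matrix ((*\<^sub>R) (\<phi>' (y$1))) :: real^1^1)\<bar>) = integral ?S1 (\<lambda>y::real^1. \<bar>\<phi>' (y$1)\<bar>)"
    by (simp add: det_scale1)
  also have "\<dots> \<le> integral ?S1 (\<lambda>y::real^1. G (y$1))"
    by (rule integral_le[OF int1 Gint1]) (use bnd in auto)
  finally have M2: "measure lebesgue (vec ` (\<phi> ` S) :: (real^1) set) \<le> integral S G"
    using M Gint1v img by simp
  have L2: "(vec ` (\<phi> ` S) :: (real^1) set) \<in> lmeasurable" using L img by simp
  show ?thesis using vec_image_lmeasurable[OF L2] M2 by simp
qed



lemma components_countable_real: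
  fixes G :: "real set" assumes G: "open G" shows "countable (components G)"
proof -
  have ex: "\<exists>q. q \<in> \<rat> \<and> q \<in> C" if C: "C \<in> components G" for C
  proof -
    have oC: "open C" using open_components[OF G C] .
    obtain x where x: "x \<in> C" using in_components_nonempty[OF C] by auto
    obtain \<epsilon> where \<epsilon>: "\<epsilon> > 0" "ball x \<epsilon> \<subseteq> C" using oC x open_contains_ball by blast
    obtain q where q: "q \<in> \<rat>" "x < q" "q < x + \<epsilon>" using Rats_dense_in_real[of x "x + \<epsilon>"] \<epsilon> by auto
    have "q \<in> ball x \<epsilon>" using q by (simp add: dist_real_def)
    then show ?thesis using q \<epsilon> by blast
  qed
  define r :: "real set \<Rightarrow> real" where "r C = (SOME q. q \<in> \<rat> \<and> q \<in> C)" for C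
  have r: "r C \<in> \<rat> \<and> r C \<in> C" if "C \<in> components G" for C
    unfolding r_def by (rule someI_ex[OF ex[OF that]])
  have inj: "inj_on r (components G)"
  proof (rule inj_onI)
    fix C C' assume C: "C \<in> components G" and C': "C' \<in> components G" and eq: "r C = r C'"
    show "C = C'"
    proof (rule ccontr)
      assume "C \<noteq> C'"
      then have "C \<inter> C' = {}" using pairwise_disjoint_components[of G] C C' unfolding pairwise_def by blast
      then show False using r[OF C] r[OF C'] eq by auto
    qed
  qed
  have "countable (r ` components G)"
    by (rule countable_subset[OF _ countable_rat]) (use r in auto)
  then show ?thesis using countable_image_inj_on inj by blast
qed

lemma ac_lusin:
  fixes \<phi> :: "real \<Rightarrow> real"
  assumes ac: "abs_cont_on {u..t} \<phi>" and cont: "continuous_on {u..t} \<phi>"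
    and N: "negligible N" and Nut: "N \<subseteq> {u..t}"
  shows "negligible (\<phi> ` N)"
  unfolding negligible_outer_le
proof (intro allI impI)
  fix e :: real assume e: "e > 0"
  from ac[unfolded abs_cont_on_def, rule_format, OF e] obtain \<delta> where \<delta>: "\<delta> > 0"
    and H: "\<forall>(n::nat) (U::nat \<Rightarrow> real) (V::nat \<Rightarrow> real).
        (\<forall>i<n. U i \<in> {u..t} \<and> V i \<in> {u..t} \<and> U i \<le> V i) \<and>
        (\<forall>i<n. \<forall>j<n. i \<noteq> j \<longrightarrow> V i \<le> U j \<or> V j \<le> U i) \<and>
        (\<Sum>i<n. V i - U i) < \<delta>
        \<longrightarrow> (\<Sum>i<n. norm (\<phi> (V i) - \<phi> (U i))) < e"
    by (elim exE conjE) (rule that)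
  obtain G where G: "open G" "N \<subseteq> G" "(G - N) \<in> lmeasurable" "emeasure lebesgue (G - N) < ennreal \<delta>"
    using sets_lebesgue_outer_open[OF negligible_imp_sets[OF N] \<delta>] by blast
  have NL: "N \<in> lmeasurable" using negligible_imp_measurable[OF N] .
  have Geq: "G = N \<union> (G - N)" using G(2) by auto
  have GL: "G \<in> lmeasurable"
  proof -
    have "N \<union> (G - N) \<in> lmeasurable" by (rule fmeasurable.Un[OF NL G(3)])
    then show ?thesis using Geq by simp
  qed
  have mGN: "measure lebesgue (G - N) < \<delta>"
    using G(4) emeasure_eq_measure2[OF G(3)] \<delta> by (simp add: ennreal_less_iff)
  have mG: "measure lebesgue G < \<delta>"
  proof -
    have "measure lebesgue (N \<union> (G - N)) \<le> measure lebesgue N + measure lebesgue (G - N)"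
      by (rule measure_Un_le) (use NL G(3) in \<open>auto dest: fmeasurableD\<close>)
    then have "measure lebesgue G \<le> measure lebesgue N + measure lebesgue (G - N)"
      using Geq by simp
    then show ?thesis using negligible_imp_measure0[OF N] mGN by simp
  qed
  define \<C> where "\<C> = {C \<in> components G. C \<inter> {u..t} \<noteq> {}}"
  define J where "J C = C \<inter> {u..t}" for C
  define a where "a C = Inf (J C)" for C
  define b where "b C = Sup (J C)" for C
  have Jne: "J C \<noteq> {}" and Jbb: "bdd_below (J C)" and Jba: "bdd_above (J C)" if "C \<in> \<C>" for C
    using that by (auto simp: \<C>_def J_def bdd_below_def bdd_above_def)
  have inJ: "a C \<le> x \<and> x \<le> b C" if "C \<in> \<C>" "x \<in> J C" for C x
    unfolding a_def b_def using that Jbb Jba by (auto intro: cInf_lower cSup_upper)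
  have ab: "u \<le> a C \<and> a C \<le> b C \<and> b C \<le> t" if C: "C \<in> \<C>" for C
  proof -
    obtain x where x: "x \<in> J C" using Jne[OF C] by auto
    have "u \<le> a C" unfolding a_def by (rule cInf_greatest[OF Jne[OF C]]) (auto simp: J_def)
    moreover have "b C \<le> t" unfolding b_def by (rule cSup_least[OF Jne[OF C]]) (auto simp: J_def)
    ultimately show ?thesis using inJ[OF C x] by auto
  qed
  have Jint: "is_interval (J C)" if C: "C \<in> \<C>" for C
  proof -
    have "C \<in> components G" using C by (simp add: \<C>_def)
    then have "is_interval C" using in_components_connected is_interval_connected_1 by blast
    then show ?thesis unfolding J_def by (intro is_interval_Int) (auto simp: is_interval_cc)
  qed
  have box: "{a C<..<b C} \<subseteq> C" if C: "C \<in> \<C>" for C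
  proof
    fix x assume x: "x \<in> {a C<..<b C}"
    obtain p where p: "p \<in> J C" "p < x"
      using x cInf_less_iff[OF Jne[OF C] Jbb[OF C]] unfolding a_def by auto
    obtain q where q: "q \<in> J C" "x < q"
      using x less_cSup_iff[OF Jne[OF C] Jba[OF C]] unfolding b_def by auto
    have "x \<in> J C" using Jint[OF C] p q unfolding is_interval_1 by (meson less_imp_le)
    then show "x \<in> C" by (simp add: J_def)
  qed
  have disjC: "C \<inter> C' = {}" if "C \<in> \<C>" "C' \<in> \<C>" "C \<noteq> C'" for C C'
    using that pairwise_disjoint_components[of G] unfolding pairwise_def \<C>_def by blast
  have single: "a C = b C \<Longrightarrow> a C \<in> C" if C: "C \<in> \<C>" for C
  proof -
    assume eq: "a C = b C"
    obtain x where x: "x \<in> J C" using Jne[OF C] by auto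
    then have "x = a C" using inJ[OF C x] eq by auto
    then show "a C \<in> C" using x by (simp add: J_def)
  qed
  have disj: "b C \<le> a C' \<or> b C' \<le> a C" if C: "C \<in> \<C>" and C': "C' \<in> \<C>" and ne: "C \<noteq> C'" for C C'
  proof (rule ccontr)
    assume "\<not> (b C \<le> a C' \<or> b C' \<le> a C)"
    then have h: "a C' < b C" "a C < b C'" by auto
    have abC: "a C \<le> b C" and abC': "a C' \<le> b C'" using ab C C' by auto
    show False
    proof (cases "a C = b C")
      case True
      then have "a C \<in> C" using single[OF C] by simp
      moreover have "a C \<in> C'" using box[OF C'] h True by auto
      ultimately show False using disjC[OF C C' ne] by auto
    next
      case F1: False
      show False
      proof (cases "a C' = b C'")
        case True
        then have "a C' \<in> C'" using single[OF C'] by simp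
        moreover have "a C' \<in> C" using box[OF C] h True by auto
        ultimately show False using disjC[OF C C' ne] by auto
      next
        case False
        define x where "x = (max (a C) (a C') + min (b C) (b C')) / 2"
        have "max (a C) (a C') < min (b C) (b C')" using h F1 False abC abC' by auto
        then have "x \<in> {a C<..<b C}" "x \<in> {a C'<..<b C'}" unfolding x_def by auto
        then show False using box[OF C] box[OF C'] disjC[OF C C' ne] by blast
      qed
    qed
  qed
  have img_ex: "\<exists>x y. x \<in> {a C..b C} \<and> y \<in> {a C..b C} \<and> \<phi> ` {a C..b C} = {\<phi> x..\<phi> y}" if C: "C \<in> \<C>" for C
  proof -
    have sub: "{a C..b C} \<subseteq> {u..t}" using ab[OF C] by auto
    obtain c d where cd: "\<phi> ` {a C..b C} = {c..d}" "c \<le> d"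
      using continuous_image_closed_interval[of "a C" "b C" \<phi>] ab[OF C] continuous_on_subset[OF cont sub] by blast
    have "c \<in> \<phi> ` {a C..b C}" "d \<in> \<phi> ` {a C..b C}" using cd by auto
    then obtain x y where "x \<in> {a C..b C}" "\<phi> x = c" "y \<in> {a C..b C}" "\<phi> y = d" by auto
    then show ?thesis using cd by blast
  qed
  then obtain xC yC where xy: "\<And>C. C \<in> \<C> \<Longrightarrow> xC C \<in> {a C..b C} \<and> yC C \<in> {a C..b C} \<and> \<phi> ` {a C..b C} = {\<phi> (xC C)..\<phi> (yC C)}"
    by metis
  define I where "I C = \<phi> ` {a C..b C}" for C
  have IL: "I C \<in> lmeasurable" if "C \<in> \<C>" for C using xy[OF that] by (simp add: I_def)
  have mI: "measure lebesgue (I C) = \<phi> (yC C) - \<phi> (xC C)" if C: "C \<in> \<C>" for C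
  proof -
    have "I C = {\<phi> (xC C)..\<phi> (yC C)}" using xy[OF C] by (simp add: I_def)
    moreover have "\<phi> (xC C) \<le> \<phi> (yC C)"
    proof -
      have "{\<phi> (xC C)..\<phi> (yC C)} \<noteq> {}" using xy[OF C] by blast
      then show ?thesis by simp
    qed
    ultimately show ?thesis by simp
  qed
  have cover: "\<phi> ` N \<subseteq> (\<Union>C\<in>\<C>. I C)"
  proof
    fix y assume "y \<in> \<phi> ` N"
    then obtain x where x: "x \<in> N" "y = \<phi> x" by auto
    have "x \<in> G" using G(2) x by auto
    then obtain C where C: "C \<in> components G" "x \<in> C" using Union_components[of G] by blast
    have xut: "x \<in> {u..t}" using Nut x by auto
    have CC: "C \<in> \<C>" using C xut by (auto simp: \<C>_def)
    have "x \<in> J C" using C xut by (simp add: J_def)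
    then have "x \<in> {a C..b C}" using inJ[OF CC] by auto
    then have "y \<in> I C" using x by (simp add: I_def)
    then show "y \<in> (\<Union>C\<in>\<C>. I C)" using CC by blast
  qed
  have cnt: "countable \<C>"
    using countable_subset[OF _ components_countable_real[OF G(1)]] by (auto simp: \<C>_def)
  have bound: "measure lebesgue (\<Union>C\<in>I'. I C) \<le> e" if I': "I' \<subseteq> \<C>" "finite I'" for I'
  proof -
    obtain h where h: "bij_betw h {0..<card I'} I'" using ex_bij_betw_nat_finite[OF I'(2)] by blast
    define n where "n = card I'"
    have hI: "i < n \<Longrightarrow> h i \<in> I'" for i using h unfolding n_def bij_betw_def by auto
    have hinj: "i < n \<Longrightarrow> j < n \<Longrightarrow> i \<noteq> j \<Longrightarrow> h i \<noteq> h j" for i j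
      using h unfolding n_def bij_betw_def inj_on_def by auto
    define U where "U i = min (xC (h i)) (yC (h i))" for i
    define V where "V i = max (xC (h i)) (yC (h i))" for i
    have UV: "a (h i) \<le> U i \<and> U i \<le> V i \<and> V i \<le> b (h i)" if "i < n" for i
      using xy[of "h i"] hI[OF that] I'(1) by (auto simp: U_def V_def)
    have c1: "\<forall>i<n. U i \<in> {u..t} \<and> V i \<in> {u..t} \<and> U i \<le> V i"
    proof (intro allI impI)
      fix i assume i: "i < n"
      have "h i \<in> \<C>" using hI[OF i] I'(1) by auto
      then show "U i \<in> {u..t} \<and> V i \<in> {u..t} \<and> U i \<le> V i" using UV[OF i] ab[of "h i"] by auto
    qed
    have c2: "\<forall>i<n. \<forall>j<n. i \<noteq> j \<longrightarrow> V i \<le> U j \<or> V j \<le> U i"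
    proof (intro allI impI)
      fix i j assume i: "i < n" and j: "j < n" and ij: "i \<noteq> j"
      have "b (h i) \<le> a (h j) \<or> b (h j) \<le> a (h i)"
        using disj[of "h i" "h j"] hI[OF i] hI[OF j] I'(1) hinj[OF i j ij] by auto
      then show "V i \<le> U j \<or> V j \<le> U i" using UV[OF i] UV[OF j] by auto
    qed
    have sumI: "(\<Sum>C\<in>I'. f C) = (\<Sum>i<n. f (h i))" for f :: "(real set) \<Rightarrow> real"
      using sum.reindex_bij_betw[OF h, of f] by (simp add: n_def atLeast0LessThan)
    have boxes: "measure lebesgue (\<Union>C\<in>I'. {a C<..<b C}) = (\<Sum>C\<in>I'. b C - a C)"
    proof -
      have "measure lebesgue (\<Union>C\<in>I'. {a C<..<b C}) = (\<Sum>C\<in>I'. measure lebesgue {a C<..<b C})"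
      proof (rule measure_UNION')
        show "finite I'" by (rule I'(2))
        show "\<And>C. C \<in> I' \<Longrightarrow> {a C<..<b C} \<in> lmeasurable" by simp
        show "pairwise (\<lambda>C C'. disjnt {a C<..<b C} {a C'<..<b C'}) I'"
          unfolding pairwise_def disjnt_def
        proof (intro ballI impI)
          fix C C' assume "C \<in> I'" "C' \<in> I'" "C \<noteq> C'"
          then show "{a C<..<b C} \<inter> {a C'<..<b C'} = {}"
            using box[of C] box[of C'] disjC[of C C'] I'(1) by blast
        qed
      qed
      also have "\<dots> = (\<Sum>C\<in>I'. b C - a C)"
        using ab I'(1) by (intro sum.cong) auto
      finally show ?thesis .
    qed
    have "(\<Sum>C\<in>I'. b C - a C) \<le> measure lebesgue G"
    proof -
      have "(\<Union>C\<in>I'. {a C<..<b C}) \<subseteq> G"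
      proof
        fix x assume "x \<in> (\<Union>C\<in>I'. {a C<..<b C})"
        then obtain C where C: "C \<in> I'" "x \<in> {a C<..<b C}" by blast
        have CC: "C \<in> \<C>" using C I'(1) by auto
        then have "C \<subseteq> G" using in_components_subset by (auto simp: \<C>_def)
        then show "x \<in> G" using box[OF CC] C by auto
      qed
      then have "measure lebesgue (\<Union>C\<in>I'. {a C<..<b C}) \<le> measure lebesgue G"
        by (intro measure_mono_fmeasurable GL) (use I'(2) in auto)
      then show ?thesis using boxes by simp
    qed
    then have c3: "(\<Sum>i<n. V i - U i) < \<delta>"
    proof -
      have "(\<Sum>i<n. V i - U i) \<le> (\<Sum>i<n. b (h i) - a (h i))"
        proof (intro sum_mono)
        fix i assume "i \<in> {..<n}" then have "i < n" by simp
        from UV[OF this] show "V i - U i \<le> b (h i) - a (h i)" by linarith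
      qed
      also have "\<dots> = (\<Sum>C\<in>I'. b C - a C)" using sumI[of "\<lambda>C. b C - a C"] by simp
      finally show ?thesis using mG \<open>(\<Sum>C\<in>I'. b C - a C) \<le> measure lebesgue G\<close> by linarith
    qed
    have AC: "(\<Sum>i<n. norm (\<phi> (V i) - \<phi> (U i))) < e" using H c1 c2 c3 by blast
    have "measure lebesgue (\<Union>C\<in>I'. I C) \<le> (\<Sum>C\<in>I'. measure lebesgue (I C))"
      by (rule measure_UNION_le[OF I'(2)]) (use IL I'(1) in auto)
    also have "\<dots> = (\<Sum>C\<in>I'. \<phi> (yC C) - \<phi> (xC C))" using mI I'(1) by (intro sum.cong) auto
    also have "\<dots> = (\<Sum>i<n. \<phi> (yC (h i)) - \<phi> (xC (h i)))" by (rule sumI)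
    also have "\<dots> \<le> (\<Sum>i<n. norm (\<phi> (V i) - \<phi> (U i)))"
      by (intro sum_mono) (auto simp: U_def V_def min_def max_def)
    finally show ?thesis using AC by linarith
  qed
  have "(\<Union>C\<in>\<C>. I C) \<in> lmeasurable" "measure lebesgue (\<Union>C\<in>\<C>. I C) \<le> e"
    using fmeasurable_UN_bound[OF cnt IL bound] measure_UN_bound[OF cnt IL bound] by auto
  then show "\<exists>T. \<phi> ` N \<subseteq> T \<and> T \<in> lmeasurable \<and> measure lebesgue T \<le> e"
    using cover by blast
qed


lemma abs_cont_imp_cont_gen:
  assumes "abs_cont_on S f"
  shows "continuous_on S f"
  unfolding continuous_on_iff
proof (intro ballI allI impI)
  fix x e :: real assume x: "x \<in> S" and e: "0 < e"
  from assms[unfolded abs_cont_on_def, rule_format, OF e] obtain \<delta> where \<delta>: "\<delta> > 0"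
    and H: "\<forall>(n::nat) (u::nat \<Rightarrow> real) (v::nat \<Rightarrow> real).
        (\<forall>i<n. u i \<in> S \<and> v i \<in> S \<and> u i \<le> v i) \<and>
        (\<forall>i<n. \<forall>j<n. i \<noteq> j \<longrightarrow> v i \<le> u j \<or> v j \<le> u i) \<and>
        (\<Sum>i<n. v i - u i) < \<delta>
        \<longrightarrow> (\<Sum>i<n. norm (f (v i) - f (u i))) < e"
    by (elim exE conjE) (rule that)
  show "\<exists>d>0. \<forall>x'\<in>S. dist x' x < d \<longrightarrow> dist (f x') (f x) < e"
  proof (intro exI conjI ballI impI)
    show "\<delta> > 0" by (rule \<delta>)
    fix y assume y: "y \<in> S" and yx: "dist y x < \<delta>"
    define u where "u = (\<lambda>_::nat. min x y)"
    define v where "v = (\<lambda>_::nat. max x y)"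
    have c1: "\<forall>i<1. u i \<in> S \<and> v i \<in> S \<and> u i \<le> v i"
      using x y by (auto simp: u_def v_def min_def max_def)
    have c2: "\<forall>i<1. \<forall>j<1. i \<noteq> j \<longrightarrow> v i \<le> u j \<or> v j \<le> u i" by simp
    have c3: "(\<Sum>i<1. v i - u i) < \<delta>" using yx by (simp add: u_def v_def dist_real_def)
    have "(\<Sum>i<1. norm (f (v i) - f (u i))) < e" using H[rule_format, of 1 u v] c1 c2 c3 by blast
    then have "norm (f (max x y) - f (min x y)) < e" by (simp add: u_def v_def)
    then show "dist (f y) (f x) < e"
      by (cases "x \<le> y") (simp_all add: dist_norm norm_minus_commute max_def min_def)
  qed
qed

lemma ac_fund_ineq:
  fixes \<phi> \<phi>' G :: "real \<Rightarrow> real"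
  assumes ut: "u \<le> t" and ac: "abs_cont_on {u..t} \<phi>" and N: "negligible N"
    and der: "\<And>x. x \<in> {u..t} - N \<Longrightarrow> (\<phi> has_real_derivative \<phi>' x) (at x within {u..t})"
    and G: "G integrable_on {u..t}" and G0: "\<And>x. 0 \<le> G x"
    and bnd: "\<And>x. x \<in> {u..t} - N \<Longrightarrow> \<bar>\<phi>' x\<bar> \<le> G x"
  shows "\<phi> t - \<phi> u \<le> integral {u..t} G"
proof (cases "\<phi> t \<le> \<phi> u")
  case True
  have "0 \<le> integral {u..t} G" by (rule Henstock_Kurzweil_Integration.integral_nonneg[OF G]) (use G0 in auto)
  then show ?thesis using True by linarith
next
  case False
  have cont: "continuous_on {u..t} \<phi>" by (rule abs_cont_imp_cont_gen[OF ac])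
  define S where "S = {u..t} - N"
  define N' where "N' = N \<inter> {u..t}"
  have SL: "S \<in> sets lebesgue" unfolding S_def using negligible_imp_sets[OF N] by auto
  have derS: "(\<phi> has_real_derivative \<phi>' x) (at x within S)" if "x \<in> S" for x
    using der[of x] that by (auto simp: S_def intro: has_field_derivative_subset)
  have GabsI: "G absolutely_integrable_on {u..t}" by (rule nonnegative_absolutely_integrable_1[OF G]) (use G0 in auto)
  have GS: "G integrable_on S"
  proof -
    have "set_integrable lebesgue S G" by (rule set_integrable_subset[OF GabsI SL]) (auto simp: S_def)
    then show ?thesis by (rule set_lebesgue_integral_eq_integral(1))
  qed
  have img: "\<phi> ` S \<in> lmeasurable \<and> measure lebesgue (\<phi> ` S) \<le> integral S G"
    by (rule image_measure_bound[OF SL derS GS]) (use bnd in \<open>auto simp: S_def\<close>)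
  have negN': "negligible (\<phi> ` N')"
    by (rule ac_lusin[OF ac cont]) (use N in \<open>auto simp: N'_def intro: negligible_subset\<close>)
  have sub: "{\<phi> u..\<phi> t} \<subseteq> \<phi> ` S \<union> \<phi> ` N'"
  proof
    fix y assume y: "y \<in> {\<phi> u..\<phi> t}"
    then obtain x where x: "u \<le> x" "x \<le> t" "\<phi> x = y" using IVT'[of \<phi> u y t] ut cont by auto
    then show "y \<in> \<phi> ` S \<union> \<phi> ` N'" by (cases "x \<in> N") (auto simp: S_def N'_def)
  qed
  have UL: "\<phi> ` S \<union> \<phi> ` N' \<in> lmeasurable"
    using img negligible_imp_measurable[OF negN'] by (intro fmeasurable.Un) auto
  have "\<phi> t - \<phi> u = measure lebesgue {\<phi> u..\<phi> t}" using False by simp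
  also have "\<dots> \<le> measure lebesgue (\<phi> ` S \<union> \<phi> ` N')"
    by (rule measure_mono_fmeasurable[OF sub _ UL]) simp
  also have "\<dots> \<le> measure lebesgue (\<phi> ` S) + measure lebesgue (\<phi> ` N')"
    by (rule measure_Un_le) (use img negligible_imp_measurable[OF negN'] in \<open>auto dest: fmeasurableD\<close>)
  also have "\<dots> = measure lebesgue (\<phi> ` S)" using negligible_imp_measure0[OF negN'] by simp
  also have "\<dots> \<le> integral S G" using img by simp
  also have "\<dots> \<le> integral {u..t} G"
    by (rule integral_subset_le[OF _ GS G]) (auto simp: S_def G0)
  finally show ?thesis .
qed


lemma abs_cont_on_contr:
  assumes ac: "abs_cont_on S f" and TS: "T \<subseteq> S" and c: "\<And>x y. norm (g x - g y) \<le> norm (f x - f y)"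
  shows "abs_cont_on T g"
  unfolding abs_cont_on_def
proof (intro allI impI)
  fix e :: real assume e: "e > 0"
  from ac[unfolded abs_cont_on_def, rule_format, OF e] obtain \<delta> where \<delta>: "\<delta> > 0"
    and H: "\<forall>(n::nat) (u::nat \<Rightarrow> real) (v::nat \<Rightarrow> real).
        (\<forall>i<n. u i \<in> S \<and> v i \<in> S \<and> u i \<le> v i) \<and>
        (\<forall>i<n. \<forall>j<n. i \<noteq> j \<longrightarrow> v i \<le> u j \<or> v j \<le> u i) \<and>
        (\<Sum>i<n. v i - u i) < \<delta>
        \<longrightarrow> (\<Sum>i<n. norm (f (v i) - f (u i))) < e"
    by (elim exE conjE) (rule that)
  show "\<exists>\<delta>>0. \<forall>(n::nat) (u::nat \<Rightarrow> real) (v::nat \<Rightarrow> real).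
        (\<forall>i<n. u i \<in> T \<and> v i \<in> T \<and> u i \<le> v i) \<and>
        (\<forall>i<n. \<forall>j<n. i \<noteq> j \<longrightarrow> v i \<le> u j \<or> v j \<le> u i) \<and>
        (\<Sum>i<n. v i - u i) < \<delta>
        \<longrightarrow> (\<Sum>i<n. norm (g (v i) - g (u i))) < e"
  proof (intro exI conjI allI impI)
    show "\<delta> > 0" by (rule \<delta>)
    fix n :: nat and u v :: "nat \<Rightarrow> real"
    assume h: "(\<forall>i<n. u i \<in> T \<and> v i \<in> T \<and> u i \<le> v i) \<and>
        (\<forall>i<n. \<forall>j<n. i \<noteq> j \<longrightarrow> v i \<le> u j \<or> v j \<le> u i) \<and> (\<Sum>i<n. v i - u i) < \<delta>"
    have h1: "\<forall>i<n. u i \<in> S \<and> v i \<in> S \<and> u i \<le> v i" using h TS by blast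
    have "(\<Sum>i<n. norm (f (v i) - f (u i))) < e"
      using H[rule_format, of n u v] h1 h by blast
    moreover have "(\<Sum>i<n. norm (g (v i) - g (u i))) \<le> (\<Sum>i<n. norm (f (v i) - f (u i)))"
      by (intro sum_mono c)
    ultimately show "(\<Sum>i<n. norm (g (v i) - g (u i))) < e" by linarith
  qed
qed

lemma ACd_bound:
  assumes d: "1 \<le> d" and A: "ACd d Y f"
  shows "\<exists>g. (\<forall>x. 0 \<le> g x) \<and> Lp_loc d g \<and> (\<forall>u t. 0 \<le> u \<and> u \<le> t \<longrightarrow> cmod (f t - f u) \<le> integral {u..t} g)"
proof -
  obtain g0 where g0L: "Lp_loc d g0"
    and AEd: "AE x in lebesgue_on {0..}. (f has_vector_derivative g0 x) (at x within {0..})"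
    and acT: "\<And>T. T > 0 \<Longrightarrow> abs_cont_on {0..T} f"
    using A unfolding ACd_def by blast
  define g where "g x = cmod (g0 x)" for x
  have gL: "Lp_loc d g" using g0L unfolding Lp_loc_def g_def by (auto intro: Lp_on_norm)
  have "AE x in lebesgue. x \<in> {0..} \<longrightarrow> (f has_vector_derivative g0 x) (at x within {0..})"
    using AEd by (subst (asm) AE_restrict_space_iff) auto
  then obtain N where N: "negligible N"
    and NN: "{x. \<not> (x \<in> {0..} \<longrightarrow> (f has_vector_derivative g0 x) (at x within {0..}))} \<subseteq> N"
    unfolding eventually_ae_filter_negligible by blast
  have derN: "(f has_vector_derivative g0 x) (at x within {0..})" if "x \<in> {0..}" "x \<notin> N" for x
    using NN that by blast
  have main: "cmod (f t - f u) \<le> integral {u..t} g" if ut: "0 \<le> u" "u \<le> t" for u t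
  proof -
    have gLt: "Lp_on d {0..t+1} g" using gL ut by (auto simp: Lp_loc_def)
    have gint: "g integrable_on {u..t}" using Lp_on_integrable_on[OF d gLt] ut by auto
    show ?thesis
    proof (cases "f t = f u")
      case True
      have "0 \<le> integral {u..t} g"
        by (rule Henstock_Kurzweil_Integration.integral_nonneg[OF gint]) (simp add: g_def)
      then show ?thesis using True by simp
    next
      case False
      define w where "w = f t - f u"
      have w0: "cmod w > 0" using False by (simp add: w_def)
      define e where "e = w / complex_of_real (cmod w)"
      have e1: "cmod e = 1" using w0 by (simp add: e_def norm_divide)
      define \<phi> where "\<phi> x = Re (cnj e * f x)" for x
      define \<phi>' where "\<phi>' x = Re (cnj e * g0 x)" for x
      have acf: "abs_cont_on {0..t+1} f" using acT ut by simp
      have ac: "abs_cont_on {u..t} \<phi>"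
      proof (rule abs_cont_on_contr[OF acf])
        show "{u..t} \<subseteq> {0..t+1}" using ut by auto
        fix x y
        have "norm (\<phi> x - \<phi> y) = \<bar>Re (cnj e * (f x - f y))\<bar>" by (simp add: \<phi>_def algebra_simps)
        also have "\<dots> \<le> cmod (cnj e * (f x - f y))" by (rule abs_Re_le_cmod)
        also have "\<dots> = norm (f x - f y)" using e1 by (simp add: norm_mult)
        finally show "norm (\<phi> x - \<phi> y) \<le> norm (f x - f y)" .
      qed
      have der: "(\<phi> has_real_derivative \<phi>' x) (at x within {u..t})" if x: "x \<in> {u..t} - N" for x
      proof -
        have "(f has_vector_derivative g0 x) (at x within {0..})" using derN x ut by auto
        then have "((\<lambda>x. cnj e * f x) has_vector_derivative cnj e * g0 x) (at x within {0..})"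
          by (rule has_vector_derivative_mult_right)
        then have "((\<lambda>x. Re (cnj e * f x)) has_vector_derivative Re (cnj e * g0 x)) (at x within {0..})"
          by (rule bounded_linear.has_vector_derivative[OF bounded_linear_Re])
        then have "(\<phi> has_real_derivative \<phi>' x) (at x within {0..})"
          unfolding \<phi>_def \<phi>'_def has_real_derivative_iff_has_vector_derivative .
        then show ?thesis by (rule has_field_derivative_subset) (use ut in auto)
      qed
      have bnd: "\<bar>\<phi>' x\<bar> \<le> g x" for x
      proof -
        have "\<bar>\<phi>' x\<bar> \<le> cmod (cnj e * g0 x)" unfolding \<phi>'_def by (rule abs_Re_le_cmod)
        also have "\<dots> = g x" using e1 by (simp add: norm_mult g_def)
        finally show ?thesis .
      qed
      have "\<phi> t - \<phi> u \<le> integral {u..t} g"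
      proof (rule ac_fund_ineq[OF ut(2) ac N der gint])
        show "\<And>x. 0 \<le> g x" by (simp add: g_def)
        show "\<And>x. x \<in> {u..t} - N \<Longrightarrow> \<bar>\<phi>' x\<bar> \<le> g x" using bnd by blast
      qed
      moreover have "\<phi> t - \<phi> u = cmod w"
      proof -
        have "\<phi> t - \<phi> u = Re (cnj e * w)" by (simp add: \<phi>_def w_def algebra_simps)
        also have "cnj e * w = complex_of_real (cmod w)"
        proof -
          have "cnj e * w = (w * cnj w) / complex_of_real (cmod w)" by (simp add: e_def)
          also have "w * cnj w = complex_of_real ((cmod w)^2)" by (rule complex_norm_square[symmetric])
          finally show ?thesis using w0 by (simp add: power2_eq_square)
        qed
        finally show ?thesis by simp
      qed
      ultimately show ?thesis by (simp add: w_def)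
    qed
  qed
  show ?thesis
  proof (intro exI[of _ g] conjI)
    show "\<forall>x. 0 \<le> g x" by (simp add: g_def)
    show "Lp_loc d g" by (rule gL)
    show "\<forall>u t. 0 \<le> u \<and> u \<le> t \<longrightarrow> cmod (f t - f u) \<le> integral {u..t} g" using main by blast
  qed
qed


lemma abs_cont_imp_cont:
  assumes "abs_cont_on {0..T} f"
  shows "continuous_on {0..T} f"
  unfolding continuous_on_iff
proof (intro ballI allI impI)
  fix x e :: real assume x: "x \<in> {0..T}" and e: "0 < e"
  from assms[unfolded abs_cont_on_def, rule_format, OF e] obtain \<delta> where \<delta>: "\<delta> > 0"
    and H: "\<forall>(n::nat) (u::nat \<Rightarrow> real) (v::nat \<Rightarrow> real).
        (\<forall>i<n. u i \<in> {0..T} \<and> v i \<in> {0..T} \<and> u i \<le> v i) \<and>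
        (\<forall>i<n. \<forall>j<n. i \<noteq> j \<longrightarrow> v i \<le> u j \<or> v j \<le> u i) \<and>
        (\<Sum>i<n. v i - u i) < \<delta>
        \<longrightarrow> (\<Sum>i<n. norm (f (v i) - f (u i))) < e"
    by (elim exE conjE) (rule that)
  show "\<exists>d>0. \<forall>x'\<in>{0..T}. dist x' x < d \<longrightarrow> dist (f x') (f x) < e"
  proof (intro exI conjI ballI impI)
    show "\<delta> > 0" by (rule \<delta>)
    fix y assume y: "y \<in> {0..T}" and yx: "dist y x < \<delta>"
    define u where "u = (\<lambda>_::nat. min x y)"
    define v where "v = (\<lambda>_::nat. max x y)"
    have c1: "\<forall>i<1. u i \<in> {0..T} \<and> v i \<in> {0..T} \<and> u i \<le> v i"
      using x y by (auto simp: u_def v_def)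
    have c2: "\<forall>i<1. \<forall>j<1. i \<noteq> j \<longrightarrow> v i \<le> u j \<or> v j \<le> u i" by simp
    have c3: "(\<Sum>i<1. v i - u i) < \<delta>" using yx by (simp add: u_def v_def dist_real_def)
    have "(\<Sum>i<1. norm (f (v i) - f (u i))) < e" using H[rule_format, of 1 u v] c1 c2 c3 by blast
    then have "norm (f (max x y) - f (min x y)) < e" by (simp add: u_def v_def)
    then show "dist (f y) (f x) < e"
      by (cases "x \<le> y") (simp_all add: dist_norm norm_minus_commute max_def min_def)
  qed
qed


lemma EF_cong:
  assumes "evolution_family d \<phi>"
    and eq: "\<And>s t z. 0 \<le> s \<Longrightarrow> s \<le> t \<Longrightarrow> cmod z < 1 \<Longrightarrow> \<phi>' s t z = \<phi> s t z"
  shows "evolution_family d \<phi>'"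
proof -
  note E = EF_parts[OF assms(1)]
  have eq': "\<And>s t z. 0 \<le> s \<Longrightarrow> s \<le> t \<Longrightarrow> z \<in> unit_disk \<Longrightarrow> \<phi>' s t z = \<phi> s t z"
    using eq by (simp add: in_disk_iff)
  have P1: "\<forall>s t. 0 \<le> s \<and> s \<le> t \<longrightarrow> \<phi>' s t holomorphic_on unit_disk \<and> \<phi>' s t ` unit_disk \<subseteq> unit_disk"
  proof (intro allI impI conjI)
    fix s t :: real assume st: "0 \<le> s \<and> s \<le> t"
    show "\<phi>' s t holomorphic_on unit_disk"
      by (rule holomorphic_transform[OF E(1)]) (use st eq' in auto)
    show "\<phi>' s t ` unit_disk \<subseteq> unit_disk"
    proof
      fix w assume "w \<in> \<phi>' s t ` unit_disk"
      then obtain z where z: "z \<in> unit_disk" "w = \<phi>' s t z" by blast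
      then have "w = \<phi> s t z" using eq' st by simp
      then show "w \<in> unit_disk" using E(2)[of s t z] st z by (simp add: in_disk_iff)
    qed
  qed
  have P2: "\<forall>s\<ge>0. \<forall>z\<in>unit_disk. \<phi>' s s z = z"
  proof (intro allI impI ballI)
    fix s :: real and z assume "0 \<le> s" "z \<in> unit_disk"
    then show "\<phi>' s s z = z" using eq'[of s s z] E(3)[of s z] by (simp add: in_disk_iff)
  qed
  have P3: "\<forall>s u t. 0 \<le> s \<and> s \<le> u \<and> u \<le> t \<longrightarrow> (\<forall>z\<in>unit_disk. \<phi>' s t z = \<phi>' u t (\<phi>' s u z))"
  proof (intro allI impI ballI)
    fix s u t :: real and z assume h: "0 \<le> s \<and> s \<le> u \<and> u \<le> t" and z: "z \<in> unit_disk"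
    have zz: "cmod z < 1" using z by (simp add: in_disk_iff)
    have m: "\<phi> s u z \<in> unit_disk" using E(2)[of s u z] h zz by (simp add: in_disk_iff)
    have "\<phi>' s t z = \<phi> s t z" using eq'[of s t z] h z by simp
    also have "\<dots> = \<phi> u t (\<phi> s u z)" using E(4)[of s u t z] h zz by simp
    also have "\<dots> = \<phi>' u t (\<phi> s u z)" using eq'[of u t "\<phi> s u z"] h m by simp
    also have "\<phi> s u z = \<phi>' s u z" using eq'[of s u z] h z by simp
    finally show "\<phi>' s t z = \<phi>' u t (\<phi>' s u z)" .
  qed
  have P4: "\<forall>z\<in>unit_disk. \<forall>T>0. \<exists>k::real \<Rightarrow> real. (\<forall>x. 0 \<le> k x) \<and> Lp_on d {0..T} k \<and>
        (\<forall>s u t. 0 \<le> s \<and> s \<le> u \<and> u \<le> t \<and> t \<le> T \<longrightarrow> norm (\<phi>' s u z - \<phi>' s t z) \<le> integral {u..t} k)"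
  proof (intro ballI allI impI)
    fix z :: complex and T :: real assume z: "z \<in> unit_disk" and T: "T > 0"
    obtain k where k: "\<forall>x. 0 \<le> k x" "Lp_on d {0..T} k"
      and kb: "\<forall>s u t. 0 \<le> s \<and> s \<le> u \<and> u \<le> t \<and> t \<le> T \<longrightarrow> norm (\<phi> s u z - \<phi> s t z) \<le> integral {u..t} k"
      using E(5)[of z T] z T by (auto simp: in_disk_iff)
    have "\<forall>s u t. 0 \<le> s \<and> s \<le> u \<and> u \<le> t \<and> t \<le> T \<longrightarrow> norm (\<phi>' s u z - \<phi>' s t z) \<le> integral {u..t} k"
    proof (intro allI impI)
      fix s u t :: real assume h: "0 \<le> s \<and> s \<le> u \<and> u \<le> t \<and> t \<le> T"
      then have "\<phi>' s u z = \<phi> s u z" "\<phi>' s t z = \<phi> s t z" using eq' z by auto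
      then show "norm (\<phi>' s u z - \<phi>' s t z) \<le> integral {u..t} k" using kb h by simp
    qed
    then show "\<exists>k::real \<Rightarrow> real. (\<forall>x. 0 \<le> k x) \<and> Lp_on d {0..T} k \<and>
        (\<forall>s u t. 0 \<le> s \<and> s \<le> u \<and> u \<le> t \<and> t \<le> T \<longrightarrow> norm (\<phi>' s u z - \<phi>' s t z) \<le> integral {u..t} k)"
      using k by blast
  qed
  show ?thesis unfolding evolution_family_def using P1 P2 P3 P4 by blast
qed


theorem lemma2p8:
  fixes d :: ereal
    and \<psi> :: "real \<Rightarrow> real \<Rightarrow> complex \<Rightarrow> complex"
    and a b :: "real \<Rightarrow> complex"
    and h :: "real \<Rightarrow> complex \<Rightarrow> complex"
  assumes "1 \<le> d"
    and "evolution_family d \<psi>"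
    and "ACd d unit_disk a"
    and "ACd d (sphere 0 1) b"
    and "\<And>t z. h t z = (b t * z + a t) / (1 + b t * cnj (a t) * z)"
  shows "evolution_family d (\<lambda>s t. h t \<circ> \<psi> s t \<circ> inv_into unit_disk (h s)) \<and>
         evolution_family d (\<lambda>s t. inv_into unit_disk (h t) \<circ> \<psi> s t \<circ> h s)"
proof -
  note d = assms(1) and EF = assms(2)
  have hdef: "h = (\<lambda>t. mob (a t) (b t))" using assms(5) by (intro ext) (simp add: mob_def)
  have aD: "\<And>t. 0 \<le> t \<Longrightarrow> cmod (a t) < 1" using assms(3) by (simp add: ACd_def)
  have bS: "\<And>t. 0 \<le> t \<Longrightarrow> cmod (b t) = 1" using assms(4) by (simp add: ACd_def)
  have ac: "\<And>T. continuous_on {0..T} a"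
  proof -
    fix T :: real show "continuous_on {0..T} a"
    proof (cases "T > 0")
      case True then show ?thesis using abs_cont_imp_cont assms(3) by (auto simp: ACd_def)
    next
      case False then have "{0..T} \<subseteq> {0}" by auto
      then show ?thesis by (metis continuous_on_sing continuous_on_empty subset_singletonD)
    qed
  qed
  have bc: "\<And>T. continuous_on {0..T} b"
  proof -
    fix T :: real show "continuous_on {0..T} b"
    proof (cases "T > 0")
      case True then show ?thesis using abs_cont_imp_cont assms(4) by (auto simp: ACd_def)
    next
      case False then have "{0..T} \<subseteq> {0}" by auto
      then show ?thesis by (metis continuous_on_sing continuous_on_empty subset_singletonD)
    qed
  qed
  obtain ga where ga0: "\<forall>x. 0 \<le> ga x" and gaL: "Lp_loc d ga"
    and gab: "\<forall>u t. 0 \<le> u \<and> u \<le> t \<longrightarrow> cmod (a t - a u) \<le> integral {u..t} ga"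
    using ACd_bound[OF d assms(3)] by blast
  obtain gb where gb0: "\<forall>x. 0 \<le> gb x" and gbL: "Lp_loc d gb"
    and gbb: "\<forall>u t. 0 \<le> u \<and> u \<le> t \<longrightarrow> cmod (b t - b u) \<le> integral {u..t} gb"
    using ACd_bound[OF d assms(4)] by blast
  have S: "\<And>T::real. {0..T} \<in> sets lebesgue" by simp
  have intg: "ga integrable_on {u..t}" "gb integrable_on {u..t}" if "0 \<le> u" "u \<le> t" for u t
  proof -
    have "Lp_on d {0..t+1} ga" "Lp_on d {0..t+1} gb" using gaL gbL that by (auto simp: Lp_loc_def)
    then show "ga integrable_on {u..t}" "gb integrable_on {u..t}"
      using Lp_on_integrable_on[OF d] that by auto
  qed
  define K where "K x = 2 * (ga x + gb x)" for x
  have K0: "\<forall>x. 0 \<le> K x" using ga0 gb0 by (simp add: K_def)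
  have KL: "\<And>T. T > 0 \<Longrightarrow> Lp_on d {0..T} K"
    unfolding K_def using gaL gbL by (intro Lp_on_cmult[OF d S] Lp_on_add[OF d S]) (auto simp: Lp_loc_def)
  have intK: "integral {u..t} K = 2 * (integral {u..t} ga + integral {u..t} gb)" if "0 \<le> u" "u \<le> t" for u t
    unfolding K_def using intg[OF that]
    by (simp add: Henstock_Kurzweil_Integration.integral_add integrable_add)
  have Ia: "0 \<le> integral {u..t} ga" "0 \<le> integral {u..t} gb" if "0 \<le> u" "u \<le> t" for u t
    using intg[OF that] ga0 gb0 by (auto intro: Henstock_Kurzweil_Integration.integral_nonneg)
  define a' where "a' t = -(cnj (b t) * a t)" for t
  define b' where "b' t = cnj (b t)" for t
  have a'D: "\<And>t. 0 \<le> t \<Longrightarrow> cmod (a' t) < 1" using aD bS by (simp add: a'_def norm_mult)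
  have b'S: "\<And>t. 0 \<le> t \<Longrightarrow> cmod (b' t) = 1" using bS by (simp add: b'_def)
  have a'c: "\<And>T. continuous_on {0..T} a'" unfolding a'_def
    using ac bc by (intro continuous_intros)
  have G1: "\<exists>K. (\<forall>x. 0 \<le> K x) \<and> Lp_on d {0..T} K \<and>
              (\<forall>u t. 0 \<le> u \<and> u \<le> t \<and> t \<le> T \<longrightarrow> cmod (a t - a u) + cmod (b t - b u) \<le> integral {u..t} K)"
    if T: "T > 0" for T
  proof (intro exI[of _ K] conjI)
    show "\<forall>x. 0 \<le> K x" by (rule K0)
    show "Lp_on d {0..T} K" using KL T by simp
    show "\<forall>u t. 0 \<le> u \<and> u \<le> t \<and> t \<le> T \<longrightarrow> cmod (a t - a u) + cmod (b t - b u) \<le> integral {u..t} K"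
    proof (intro allI impI)
    fix u t :: real assume ut: "0 \<le> u \<and> u \<le> t \<and> t \<le> T"
    then show "cmod (a t - a u) + cmod (b t - b u) \<le> integral {u..t} K"
      using gab[rule_format, of u t] gbb[rule_format, of u t] intK[of u t] Ia[of u t] by auto
    qed
  qed
  have G2: "\<exists>K. (\<forall>x. 0 \<le> K x) \<and> Lp_on d {0..T} K \<and>
              (\<forall>u t. 0 \<le> u \<and> u \<le> t \<and> t \<le> T \<longrightarrow> cmod (a' t - a' u) + cmod (b' t - b' u) \<le> integral {u..t} K)"
    if T: "T > 0" for T
  proof (intro exI[of _ K] conjI)
    show "\<forall>x. 0 \<le> K x" by (rule K0)
    show "Lp_on d {0..T} K" using KL T by simp
    show "\<forall>u t. 0 \<le> u \<and> u \<le> t \<and> t \<le> T \<longrightarrow> cmod (a' t - a' u) + cmod (b' t - b' u) \<le> integral {u..t} K"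
    proof (intro allI impI)
    fix u t :: real assume ut: "0 \<le> u \<and> u \<le> t \<and> t \<le> T"
    have "cmod (a' t - a' u) = cmod (cnj (b t) * (a t - a u) + (cnj (b t) - cnj (b u)) * a u)"
      unfolding a'_def by (simp add: algebra_simps norm_minus_commute)
    also have "\<dots> \<le> cmod (cnj (b t) * (a t - a u)) + cmod ((cnj (b t) - cnj (b u)) * a u)"
      by (rule norm_triangle_ineq)
    also have "\<dots> \<le> cmod (a t - a u) + cmod (b t - b u)"
    proof -
      have "cmod ((cnj (b t) - cnj (b u)) * a u) = cmod (b t - b u) * cmod (a u)"
        by (metis complex_cnj_diff complex_mod_cnj norm_mult)
      also have "\<dots> \<le> cmod (b t - b u)" using aD[of u] ut by (simp add: mult_left_le)
      finally show ?thesis using bS[of t] ut by (simp add: norm_mult)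
    qed
    finally have "cmod (a' t - a' u) \<le> cmod (a t - a u) + cmod (b t - b u)" .
    moreover have "cmod (b' t - b' u) = cmod (b t - b u)"
      unfolding b'_def by (metis complex_cnj_diff complex_mod_cnj)
    ultimately show "cmod (a' t - a' u) + cmod (b' t - b' u) \<le> integral {u..t} K"
      using gab[rule_format, of u t] gbb[rule_format, of u t] intK[of u t] Ia[of u t] ut by auto
    qed
  qed
  have EF1: "evolution_family d (\<lambda>s t. mob (a t) (b t) \<circ> \<psi> s t \<circ> mob (-(cnj (b s) * a s)) (cnj (b s)))"
    by (rule main_lemma[OF d EF aD bS ac G1])
  have EF2: "evolution_family d (\<lambda>s t. mob (a' t) (b' t) \<circ> \<psi> s t \<circ> mob (-(cnj (b' s) * a' s)) (cnj (b' s)))"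
    by (rule main_lemma[OF d EF a'D b'S a'c G2])
  have inv1: "inv_into unit_disk (h s) z = mob (a' s) (b' s) z" if "0 \<le> s" "cmod z < 1" for s z
  proof (rule inv_into_f_eq)
    show "inj_on (h s) unit_disk"
      by (rule inj_on_inverseI[where g="mob (a' s) (b' s)"])
         (use mob_inv aD bS that in \<open>auto simp: hdef a'_def b'_def in_disk_iff\<close>)
    show "mob (a' s) (b' s) z \<in> unit_disk"
      using mob_in_disk[OF a'D b'S] that by (simp add: in_disk_iff)
    show "h s (mob (a' s) (b' s) z) = z"
      using mob_inv' aD bS that by (simp add: hdef a'_def b'_def)
  qed
  have inv1': "inv_into unit_disk (mob (a s) (b s)) z = mob (a' s) (b' s) z" if "0 \<le> s" "cmod z < 1" for s z
    using inv1[OF that] by (simp add: hdef)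
  have par: "mob (-(cnj (b' s) * a' s)) (cnj (b' s)) = mob (a s) (b s)" if "0 \<le> s" for s
  proof -
    have bb: "b s * cnj (b s) = 1" using bS[OF that] complex_norm_square[of "b s"] by simp
    have "-(cnj (b' s) * a' s) = (b s * cnj (b s)) * a s" unfolding a'_def b'_def by (simp add: algebra_simps)
    then have "-(cnj (b' s) * a' s) = a s" using bb by simp
    then show ?thesis by (simp add: b'_def)
  qed
  show ?thesis
  proof
    show "evolution_family d (\<lambda>s t. h t \<circ> \<psi> s t \<circ> inv_into unit_disk (h s))"
      by (rule EF_cong[OF EF1]) (simp add: inv1' hdef a'_def b'_def)
    show "evolution_family d (\<lambda>s t. inv_into unit_disk (h t) \<circ> \<psi> s t \<circ> h s)"
    proof (rule EF_cong[OF EF2])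
      fix s t :: real and z :: complex assume st: "0 \<le> s" "s \<le> t" "cmod z < 1"
      have hz: "cmod (h s z) < 1" using mob_in_disk aD bS st by (simp add: hdef)
      have pz: "cmod (\<psi> s t (h s z)) < 1" using EF_parts(2)[OF EF] st hz by simp
      show "(inv_into unit_disk (h t) \<circ> \<psi> s t \<circ> h s) z =
            (mob (a' t) (b' t) \<circ> \<psi> s t \<circ> mob (-(cnj (b' s) * a' s)) (cnj (b' s))) z"
      proof -
        have "(inv_into unit_disk (h t) \<circ> \<psi> s t \<circ> h s) z = inv_into unit_disk (h t) (\<psi> s t (h s z))"
          by simp
        also have "\<dots> = mob (a' t) (b' t) (\<psi> s t (h s z))" using inv1[of t "\<psi> s t (h s z)"] st pz by simp
        also have "h s z = mob (a s) (b s) z" by (simp add: hdef)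
        also have "mob (a s) (b s) = mob (-(cnj (b' s) * a' s)) (cnj (b' s))" using par[OF st(1)] by simp
        finally show ?thesis by simp
      qed
    qed
  qed
qed

end
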